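(* Let $R$ be a ring, $S$ a right Ore set of $R$, and $\mathfrak{a}=\mathrm{ass}_R(S)$. Then \begin{enumerate} \item $S$ is a right localizable set of $R$ if and only if $\mathfrak{a}'\neq R$, where $\mathfrak{a}'=\mathfrak{a}'(S)$. \item Suppose $\mathfrak{a}'\neq R$. Let $\pi':R\to R':=R/\mathfrak{a}'$, $r\mapsto r'=r+\mathfrak{a}'$, and $S'=\pi'(S)$. Then \begin{enumerate} \item $S'$ is a right denominator set of $R'$; \item $\mathfrak{a}=(\pi')^{-1}(\mathrm{ass}_r(S'))$; \item $R\langle S^{-1}\rangle\simeq R'S'^{-1}$, an $R$-isomorphism. \end{enumerate} \end{enumerate}
   Context: Rings are associative with $1$. Multiplicative set: $SS\subseteq S$, $1\in S$, $0\notin S$. Right Ore set: $rS\cap sR\ne\emptyset$ for all $r\in R,s\in S$; right denominator set: right Ore and $sr=0$ ($s\in S$) implies $rt=0$ for some $t\in S$; $AT^{-1}$ denotes the right Ore localization. $\mathrm{ass}_r(T)=\{a: at=0\text{ for some } t\in T\}$. $R\langle S^{-1}\rangle=R\langle X_S\rangle/I_S$ ($R\langle X_S\rangle$ freely generated by $R$ and noncommuting $x_s$; $I_S$ generated by $sx_s-1,x_ss-1$); $\mathrm{ass}_R(S)=\ker(R\to R\langle S^{-1}\rangle)$. $S$ is right localizable if $R\langle S^{-1}\rangle\ne0$ and every element has the form $(r+I_S)(x_s+I_S)$. For a ring $A$, $\mathcal{C}'_A=\{r\in A:rx=0\Rightarrow x=0\}$; $\mathfrak{a}'(S)$ is the least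 ideal $\mathfrak{b}$ of $R$ such that the image of $S$ in $R/\mathfrak{b}$ lies in $\mathcal{C}'_{R/\mathfrak{b}}$ (it exists). *)

theory Defs
  imports "HOL-Algebra.Algebra"
begin

definition mult_set :: "'a ring \<Rightarrow> 'a set \<Rightarrow> bool" where
  "mult_set R S \<longleftrightarrow> S \<subseteq> carrier R \<and> \<one>\<^bsub>R\<^esub> \<in> S \<and> \<zero>\<^bsub>R\<^esub> \<notin> S
     \<and> (\<forall>s\<in>S. \<forall>t\<in>S. s \<otimes>\<^bsub>R\<^esub> t \<in> S)"

definition right_ore_set :: "'a ring \<Rightarrow> 'a set \<Rightarrow> bool" where
  "right_ore_set R S \<longleftrightarrow> mult_set R S \<and>
     (\<forall>r\<in>carrier R. \<forall>s\<in>S. \<exists>t\<in>S. \<exists>r'\<in>carrier R. r \<otimes>\<^bsub>R\<^esub> t = s \<otimes>\<^bsub>R\<^esub> r')"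

definition right_denominator_set :: "'a ring \<Rightarrow> 'a set \<Rightarrow> bool" where
  "right_denominator_set R S \<longleftrightarrow> right_ore_set R S \<and>
     (\<forall>s\<in>S. \<forall>r\<in>carrier R. s \<otimes>\<^bsub>R\<^esub> r = \<zero>\<^bsub>R\<^esub> \<longrightarrow> (\<exists>t\<in>S. r \<otimes>\<^bsub>R\<^esub> t = \<zero>\<^bsub>R\<^esub>))"

definition ass_r :: "'a ring \<Rightarrow> 'a set \<Rightarrow> 'a set" where
  "ass_r R T = {a \<in> carrier R. \<exists>t\<in>T. a \<otimes>\<^bsub>R\<^esub> t = \<zero>\<^bsub>R\<^esub>}"

definition is_right_ring_of_fractions ::
  "'a ring \<Rightarrow> 'a set \<Rightarrow> 'b ring \<Rightarrow> ('a \<Rightarrow> 'b) \<Rightarrow> bool" where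
  "is_right_ring_of_fractions A T Q \<phi> \<longleftrightarrow> ring Q \<and> \<phi> \<in> ring_hom A Q
     \<and> (\<forall>t\<in>T. \<phi> t \<in> Units Q)
     \<and> (\<forall>q\<in>carrier Q. \<exists>a\<in>carrier A. \<exists>t\<in>T. q = \<phi> a \<otimes>\<^bsub>Q\<^esub> inv\<^bsub>Q\<^esub> (\<phi> t))
     \<and> a_kernel A Q \<phi> = ass_r A T"

text \<open>Free (noncommutative) ring Z<X> on a set of letters X: finitely supported integer
  valued functions on words over X, with convolution product.\<close>
definition free_ring :: "'x set \<Rightarrow> ('x list \<Rightarrow> int) ring" where
  "free_ring Ls = \<lparr>carrier = {f. finite {w. f w \<noteq> 0} \<and> (\<forall>w. f w \<noteq> 0 \<longrightarrow> set w \<subseteq> Ls)},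
     monoid.mult = (\<lambda>f g w. sum (\<lambda>i. f (take i w) * g (drop i w)) {..length w}),
     monoid.one = (\<lambda>w. if w = [] then 1 else 0),
     ring.zero = (\<lambda>w. 0),
     ring.add = (\<lambda>f g w. f w + g w)\<rparr>"

definition gen :: "'x \<Rightarrow> ('x list \<Rightarrow> int)" where
  "gen x = (\<lambda>w. if w = [x] then 1 else 0)"

definition fsub :: "('x list \<Rightarrow> int) \<Rightarrow> ('x list \<Rightarrow> int) \<Rightarrow> ('x list \<Rightarrow> int)" where
  "fsub f g = (\<lambda>w. f w - g w)"

text \<open>Letters: Inl r for r in R, Inr s standing for x_s (s in S).\<close>
definition loc_letters :: "'a ring \<Rightarrow> 'a set \<Rightarrow> ('a + 'a) set" where
  "loc_letters R S = Inl ` carrier R \<union> Inr ` S"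

abbreviation FR :: "'a ring \<Rightarrow> 'a set \<Rightarrow> (('a + 'a) list \<Rightarrow> int) ring" where
  "FR R S \<equiv> free_ring (loc_letters R S)"

text \<open>Relations of R (so that FR/<R-relations> is R<X_S>, the ring freely generated by R and
  the x_s) together with the relations s x_s - 1, x_s s - 1 generating I_S.\<close>
definition loc_relations :: "'a ring \<Rightarrow> 'a set \<Rightarrow> (('a + 'a) list \<Rightarrow> int) set" where
  "loc_relations R S =
     {fsub (gen (Inl (a \<oplus>\<^bsub>R\<^esub> b))) (gen (Inl a) \<oplus>\<^bsub>FR R S\<^esub> gen (Inl b)) | a b. a \<in> carrier R \<and> b \<in> carrier R}
   \<union> {fsub (gen (Inl (a \<otimes>\<^bsub>R\<^esub> b))) (gen (Inl a) \<otimes>\<^bsub>FR R S\<^esub> gen (Inl b)) | a b. a \<in> carrier R \<and> b \<in> carrier R}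
   \<union> {fsub (gen (Inl \<one>\<^bsub>R\<^esub>)) \<one>\<^bsub>FR R S\<^esub>}
   \<union> {fsub (gen (Inl s) \<otimes>\<^bsub>FR R S\<^esub> gen (Inr s)) \<one>\<^bsub>FR R S\<^esub> | s. s \<in> S}
   \<union> {fsub (gen (Inr s) \<otimes>\<^bsub>FR R S\<^esub> gen (Inl s)) \<one>\<^bsub>FR R S\<^esub> | s. s \<in> S}"

definition loc_ideal :: "'a ring \<Rightarrow> 'a set \<Rightarrow> (('a + 'a) list \<Rightarrow> int) set" where
  "loc_ideal R S = genideal (FR R S) (loc_relations R S)"

definition univ_loc :: "'a ring \<Rightarrow> 'a set \<Rightarrow> (('a + 'a) list \<Rightarrow> int) set ring" where
  "univ_loc R S = FR R S Quot loc_ideal R S"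

definition loc_can :: "'a ring \<Rightarrow> 'a set \<Rightarrow> 'a \<Rightarrow> (('a + 'a) list \<Rightarrow> int) set" where
  "loc_can R S r = loc_ideal R S +>\<^bsub>FR R S\<^esub> gen (Inl r)"

definition loc_x :: "'a ring \<Rightarrow> 'a set \<Rightarrow> 'a \<Rightarrow> (('a + 'a) list \<Rightarrow> int) set" where
  "loc_x R S s = loc_ideal R S +>\<^bsub>FR R S\<^esub> gen (Inr s)"

definition ass_R :: "'a ring \<Rightarrow> 'a set \<Rightarrow> 'a set" where
  "ass_R R S = a_kernel R (univ_loc R S) (loc_can R S)"

definition right_localizable :: "'a ring \<Rightarrow> 'a set \<Rightarrow> bool" where
  "right_localizable R S \<longleftrightarrow> \<one>\<^bsub>univ_loc R S\<^esub> \<noteq> \<zero>\<^bsub>univ_loc R S\<^esub>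
     \<and> (\<forall>q\<in>carrier (univ_loc R S). \<exists>r\<in>carrier R. \<exists>s\<in>S.
          q = loc_can R S r \<otimes>\<^bsub>univ_loc R S\<^esub> loc_x R S s)"

definition C' :: "('b, 'm) ring_scheme \<Rightarrow> 'b set" where
  "C' A = {r \<in> carrier A. \<forall>x\<in>carrier A. r \<otimes>\<^bsub>A\<^esub> x = \<zero>\<^bsub>A\<^esub> \<longrightarrow> x = \<zero>\<^bsub>A\<^esub>}"

definition a'_cond :: "'a ring \<Rightarrow> 'a set \<Rightarrow> 'a set \<Rightarrow> bool" where
  "a'_cond R S b \<longleftrightarrow> ideal b R \<and> (\<forall>s\<in>S. b +>\<^bsub>R\<^esub> s \<in> C' (R Quot b))"

definition a' :: "'a ring \<Rightarrow> 'a set \<Rightarrow> 'a set" where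
  "a' R S = (THE b. a'_cond R S b \<and> (\<forall>c. a'_cond R S c \<longrightarrow> b \<subseteq> c))"

end

theory Submission
  imports Defs
begin

definition conv :: "('x list \<Rightarrow> int) \<Rightarrow> ('x list \<Rightarrow> int) \<Rightarrow> ('x list \<Rightarrow> int)" where
  "conv f g = (\<lambda>w. \<Sum>i\<le>length w. f (take i w) * g (drop i w))"

definition supp :: "('x list \<Rightarrow> int) \<Rightarrow> 'x list set" where
  "supp f = {w. f w \<noteq> 0}"

definition mon :: "int \<Rightarrow> 'x list \<Rightarrow> ('x list \<Rightarrow> int)" where
  "mon k u = (\<lambda>w. if w = u then k else 0)"

lemma fr_carrier: "carrier (free_ring Ls) = {f. finite (supp f) \<and> (\<forall>w. f w \<noteq> 0 \<longrightarrow> set w \<subseteq> Ls)}"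
  by (simp add: free_ring_def supp_def)
lemma fr_mult: "x \<otimes>\<^bsub>free_ring Ls\<^esub> y = conv x y"
  by (simp add: free_ring_def conv_def)
lemma fr_add: "x \<oplus>\<^bsub>free_ring Ls\<^esub> y = (\<lambda>w. x w + y w)"
  by (simp add: free_ring_def)
lemma fr_zero: "\<zero>\<^bsub>free_ring Ls\<^esub> = (\<lambda>w. 0)"
  by (simp add: free_ring_def)
lemma fr_one: "\<one>\<^bsub>free_ring Ls\<^esub> = mon 1 []"
  by (simp add: free_ring_def mon_def fun_eq_iff)

lemma triangle_swap:
  fixes F :: "nat \<Rightarrow> nat \<Rightarrow> int"
  shows "(\<Sum>i\<le>n. \<Sum>j\<le>i. F j i) = (\<Sum>j\<le>n. \<Sum>i\<in>{j..n}. F j i)"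
proof (induction n)
  case 0
  then show ?case by simp
next
  case (Suc n)
  have "(\<Sum>j\<le>Suc n. \<Sum>i\<in>{j..Suc n}. F j i)
      = (\<Sum>j\<le>n. \<Sum>i\<in>{j..Suc n}. F j i) + F (Suc n) (Suc n)" by simp
  also have "(\<Sum>j\<le>n. \<Sum>i\<in>{j..Suc n}. F j i) = (\<Sum>j\<le>n. (\<Sum>i\<in>{j..n}. F j i) + F j (Suc n))"
    by (intro sum.cong refl) (simp add: sum.atLeast_Suc_atMost_Suc_shift)
  also have "\<dots> = (\<Sum>j\<le>n. \<Sum>i\<in>{j..n}. F j i) + (\<Sum>j\<le>n. F j (Suc n))"
    by (simp add: sum.distrib)
  finally show ?case using Suc by simp
qed

lemma sum_shift_ivl:
  fixes G :: "nat \<Rightarrow> int"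
  assumes "j \<le> n"
  shows "(\<Sum>i\<in>{j..n}. G i) = (\<Sum>k\<le>n - j. G (j + k))"
  using sum.atLeastAtMost_shift_0[OF assms, of G] by (simp add: atLeast0AtMost comp_def)

lemma conv_assoc:
  fixes f g h :: "'x list \<Rightarrow> int"
  shows "conv (conv f g) h = conv f (conv g h)"
proof
  fix w :: "'x list"
  define n where "n = length w"
  have "conv (conv f g) h w = (\<Sum>i\<le>n. \<Sum>j\<le>i. f (take j w) * g (take (i - j) (drop j w)) * h (drop i w))"
    unfolding conv_def n_def
    by (intro sum.cong refl) (auto simp: sum_distrib_right min_def take_take drop_take)
  also have "\<dots> = (\<Sum>j\<le>n. \<Sum>i\<in>{j..n}. f (take j w) * g (take (i - j) (drop j w)) * h (drop i w))"
    by (rule triangle_swap)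
  also have "\<dots> = (\<Sum>j\<le>n. \<Sum>k\<le>n - j. f (take j w) * g (take k (drop j w)) * h (drop (j + k) w))"
    by (rule sum.cong[OF refl]) (simp add: sum_shift_ivl)
  also have "\<dots> = conv f (conv g h) w"
    unfolding conv_def n_def
    by (intro sum.cong refl) (auto simp: sum_distrib_left mult.assoc add.commute)
  finally show "conv (conv f g) h w = conv f (conv g h) w" .
qed

lemma conv_one_left:
  fixes f :: "'x list \<Rightarrow> int"
  shows "conv (mon 1 []) f = f"
proof
  fix w :: "'x list"
  have "conv (mon 1 []) f w = (\<Sum>i\<le>length w. if i = 0 then f w else 0)"
    unfolding conv_def mon_def by (intro sum.cong refl) auto
  then show "conv (mon 1 []) f w = f w" by simp
qed

lemma conv_one_right:
  fixes f :: "'x list \<Rightarrow> int"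
  shows "conv f (mon 1 []) = f"
proof
  fix w :: "'x list"
  have "conv f (mon 1 []) w = (\<Sum>i\<le>length w. if i = length w then f w else 0)"
    unfolding conv_def mon_def by (intro sum.cong refl) auto
  then show "conv f (mon 1 []) w = f w" by simp
qed

lemma conv_distrib_left: "conv f (\<lambda>w. g w + h w) = (\<lambda>w. conv f g w + conv f h w)"
  unfolding conv_def by (simp add: distrib_left sum.distrib)

lemma conv_distrib_right: "conv (\<lambda>w. g w + h w) f = (\<lambda>w. conv g f w + conv h f w)"
  unfolding conv_def by (simp add: distrib_right sum.distrib)

lemma supp_add: "supp (\<lambda>w. f w + g w) \<subseteq> supp f \<union> supp g"
  by (auto simp: supp_def)

lemma supp_conv: "supp (conv f g) \<subseteq> (\<lambda>(u, v). u @ v) ` (supp f \<times> supp g)"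
proof
  fix w assume "w \<in> supp (conv f g)"
  then have "(\<Sum>i\<le>length w. f (take i w) * g (drop i w)) \<noteq> 0"
    by (simp add: supp_def conv_def)
  then obtain i where "f (take i w) * g (drop i w) \<noteq> 0"
    by (metis (mono_tags, lifting) sum.neutral)
  then show "w \<in> (\<lambda>(u, v). u @ v) ` (supp f \<times> supp g)"
    by (auto simp: supp_def image_iff) (metis append_take_drop_id)
qed

lemma fr_carrierI:
  assumes "finite (supp f)" "\<And>w. f w \<noteq> 0 \<Longrightarrow> set w \<subseteq> Ls"
  shows "f \<in> carrier (free_ring Ls)"
  using assms by (simp add: fr_carrier)

lemma fr_carrierD:
  assumes "f \<in> carrier (free_ring Ls)"
  shows "finite (supp f)" "f w \<noteq> 0 \<Longrightarrow> set w \<subseteq> Ls"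
  using assms by (auto simp: fr_carrier)

lemma fr_add_closed:
  assumes "f \<in> carrier (free_ring Ls)" "g \<in> carrier (free_ring Ls)"
  shows "(\<lambda>w. f w + g w) \<in> carrier (free_ring Ls)"
proof (rule fr_carrierI)
  show "finite (supp (\<lambda>w. f w + g w))"
    using supp_add[of f g] fr_carrierD(1)[OF assms(1)] fr_carrierD(1)[OF assms(2)]
    by (meson finite_Un finite_subset)
  fix w assume "f w + g w \<noteq> 0"
  then have "f w \<noteq> 0 \<or> g w \<noteq> 0" by auto
  then show "set w \<subseteq> Ls" using fr_carrierD(2)[OF assms(1)] fr_carrierD(2)[OF assms(2)] by blast
qed

lemma fr_conv_closed:
  assumes "f \<in> carrier (free_ring Ls)" "g \<in> carrier (free_ring Ls)"
  shows "conv f g \<in> carrier (free_ring Ls)"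
proof (rule fr_carrierI)
  show "finite (supp (conv f g))"
    using supp_conv[of f g] fr_carrierD(1)[OF assms(1)] fr_carrierD(1)[OF assms(2)]
    by (meson finite_SigmaI finite_imageI finite_subset)
  fix w assume "conv f g w \<noteq> 0"
  then have "w \<in> (\<lambda>(u, v). u @ v) ` (supp f \<times> supp g)" using supp_conv[of f g]
    by (auto simp: supp_def)
  then obtain u v where "w = u @ v" "f u \<noteq> 0" "g v \<noteq> 0" by (auto simp: supp_def)
  then show "set w \<subseteq> Ls" using fr_carrierD(2)[OF assms(1)] fr_carrierD(2)[OF assms(2)] by auto
qed

lemma mon_carrier:
  assumes "set u \<subseteq> Ls"
  shows "mon k u \<in> carrier (free_ring Ls)"
proof (rule fr_carrierI)
  show "finite (supp (mon k u))"
    by (rule finite_subset[of _ "{u}"]) (auto simp: supp_def mon_def)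
  show "mon k u w \<noteq> 0 \<Longrightarrow> set w \<subseteq> Ls" for w
    using assms by (auto simp: mon_def split: if_splits)
qed

lemma free_ring_ring: "ring (free_ring Ls)"
proof (rule ringI)
  show "abelian_group (free_ring Ls)"
  proof (rule abelian_groupI)
    fix x y z
    assume x: "x \<in> carrier (free_ring Ls)" and y: "y \<in> carrier (free_ring Ls)"
      and z: "z \<in> carrier (free_ring Ls)"
    show "x \<oplus>\<^bsub>free_ring Ls\<^esub> y \<in> carrier (free_ring Ls)"
      using fr_add_closed[OF x y] by (simp add: fr_add)
    show "x \<oplus>\<^bsub>free_ring Ls\<^esub> y \<oplus>\<^bsub>free_ring Ls\<^esub> z = x \<oplus>\<^bsub>free_ring Ls\<^esub> (y \<oplus>\<^bsub>free_ring Ls\<^esub> z)"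
      by (simp add: fr_add add.assoc)
    show "x \<oplus>\<^bsub>free_ring Ls\<^esub> y = y \<oplus>\<^bsub>free_ring Ls\<^esub> x"
      by (simp add: fr_add add.commute)
    show "\<zero>\<^bsub>free_ring Ls\<^esub> \<oplus>\<^bsub>free_ring Ls\<^esub> x = x"
      by (simp add: fr_add fr_zero)
    show "\<exists>y\<in>carrier (free_ring Ls). y \<oplus>\<^bsub>free_ring Ls\<^esub> x = \<zero>\<^bsub>free_ring Ls\<^esub>"
    proof (intro bexI)
      show "(\<lambda>w. - x w) \<in> carrier (free_ring Ls)"
        using fr_carrierD[OF x] by (intro fr_carrierI) (auto simp: supp_def)
    qed (simp add: fr_add fr_zero)
  next
    show "\<zero>\<^bsub>free_ring Ls\<^esub> \<in> carrier (free_ring Ls)"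
      by (simp add: fr_zero fr_carrier supp_def)
  qed
next
  show "monoid (free_ring Ls)"
  proof (rule monoidI)
    fix x y z
    assume x: "x \<in> carrier (free_ring Ls)" and y: "y \<in> carrier (free_ring Ls)"
      and z: "z \<in> carrier (free_ring Ls)"
    show "x \<otimes>\<^bsub>free_ring Ls\<^esub> y \<in> carrier (free_ring Ls)"
      using fr_conv_closed[OF x y] by (simp add: fr_mult)
    show "x \<otimes>\<^bsub>free_ring Ls\<^esub> y \<otimes>\<^bsub>free_ring Ls\<^esub> z = x \<otimes>\<^bsub>free_ring Ls\<^esub> (y \<otimes>\<^bsub>free_ring Ls\<^esub> z)"
      by (simp add: fr_mult conv_assoc)
    show "\<one>\<^bsub>free_ring Ls\<^esub> \<otimes>\<^bsub>free_ring Ls\<^esub> x = x"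
      by (simp add: fr_mult fr_one conv_one_left)
    show "x \<otimes>\<^bsub>free_ring Ls\<^esub> \<one>\<^bsub>free_ring Ls\<^esub> = x"
      by (simp add: fr_mult fr_one conv_one_right)
  next
    show "\<one>\<^bsub>free_ring Ls\<^esub> \<in> carrier (free_ring Ls)"
      by (simp add: fr_one mon_carrier)
  qed
next
  fix x y z
  show "(x \<oplus>\<^bsub>free_ring Ls\<^esub> y) \<otimes>\<^bsub>free_ring Ls\<^esub> z = x \<otimes>\<^bsub>free_ring Ls\<^esub> z \<oplus>\<^bsub>free_ring Ls\<^esub> y \<otimes>\<^bsub>free_ring Ls\<^esub> z"
    by (simp add: fr_mult fr_add conv_distrib_right)
  show "z \<otimes>\<^bsub>free_ring Ls\<^esub> (x \<oplus>\<^bsub>free_ring Ls\<^esub> y) = z \<otimes>\<^bsub>free_ring Ls\<^esub> x \<oplus>\<^bsub>free_ring Ls\<^esub> z \<otimes>\<^bsub>free_ring Ls\<^esub> y"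
    by (simp add: fr_mult fr_add conv_distrib_left)
qed

abbreviation zm :: "('b, 'm) ring_scheme \<Rightarrow> int \<Rightarrow> 'b \<Rightarrow> 'b" where
  "zm Q k x \<equiv> add_pow Q k x"

lemma (in ring) zpow_0 [simp]: "zm R 0 x = \<zero>"
  by (simp add: add_pow_def)

lemma (in ring) zpow_add:
  "x \<in> carrier R \<Longrightarrow> zm R (i + j) x = zm R i x \<oplus> zm R j x"
  by (rule add.int_pow_mult)

lemma (in ring) zpow_closed [simp]:
  "x \<in> carrier R \<Longrightarrow> zm R i x \<in> carrier R"
  by (rule add.int_pow_closed)

lemma (in ring) zpow_1 [simp]:
  "x \<in> carrier R \<Longrightarrow> zm R 1 x = x"
  by (rule add.int_pow_1)

lemma (in ring) zpow_zero [simp]: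
  "zm R i \<zero> = \<zero>"
  by (rule add.int_pow_one)

lemma (in ring) zpow_pow:
  "x \<in> carrier R \<Longrightarrow> zm R j (zm R i x) = zm R (i * j) x"
  by (rule add.int_pow_pow)

lemma (in ring) zpow_ldistr:
  "x \<in> carrier R \<Longrightarrow> y \<in> carrier R \<Longrightarrow> zm R k x \<otimes> y = zm R k (x \<otimes> y)"
  by (rule add_pow_ldistr_int)

lemma (in ring) zpow_rdistr:
  "x \<in> carrier R \<Longrightarrow> y \<in> carrier R \<Longrightarrow> x \<otimes> zm R k y = zm R k (x \<otimes> y)"
  by (rule add_pow_rdistr_int)

lemma fr_ring_simps:
  "carrier (free_ring Ls) = {f. finite (supp f) \<and> (\<forall>w. f w \<noteq> 0 \<longrightarrow> set w \<subseteq> Ls)}"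
  "x \<otimes>\<^bsub>free_ring Ls\<^esub> y = conv x y"
  "x \<oplus>\<^bsub>free_ring Ls\<^esub> y = (\<lambda>w. x w + y w)"
  "\<zero>\<^bsub>free_ring Ls\<^esub> = (\<lambda>w. 0)"
  "\<one>\<^bsub>free_ring Ls\<^esub> = mon 1 []"
  by (simp_all add: fr_carrier fr_mult fr_add fr_zero fr_one)

lemma fr_minus:
  assumes "F \<in> carrier (free_ring Ls)"
  shows "\<ominus>\<^bsub>free_ring Ls\<^esub> F = (\<lambda>w. - F w)"
proof -
  interpret FR: ring "free_ring Ls" by (rule free_ring_ring)
  have c: "(\<lambda>w. - F w) \<in> carrier (free_ring Ls)"
    using fr_carrierD[OF assms] by (intro fr_carrierI) (auto simp: supp_def)
  show ?thesis
    by (rule FR.minus_equality) (use assms c in \<open>auto simp: fr_add fr_zero\<close>)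
qed

lemma fr_finsum:
  assumes "finite A" "f \<in> A \<rightarrow> carrier (free_ring Ls)"
  shows "finsum (free_ring Ls) f A = (\<lambda>w. \<Sum>u\<in>A. f u w)"
  using assms
proof (induction A rule: finite_induct)
  case empty
  interpret FR: ring "free_ring Ls" by (rule free_ring_ring)
  show ?case by (simp add: fr_zero)
next
  case (insert x A)
  interpret FR: ring "free_ring Ls" by (rule free_ring_ring)
  from insert show ?case by (simp add: FR.finsum_insert fr_add)
qed

lemma supp_mon_sub: "supp (mon k u) \<subseteq> {u}"
  by (auto simp: supp_def mon_def)

lemma fr_decomp:
  assumes F: "F \<in> carrier (free_ring Ls)"
  shows "F = finsum (free_ring Ls) (\<lambda>u. mon (F u) u) (supp F)"
proof -
  have fin: "finite (supp F)" using fr_carrierD[OF F] by simp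
  have "(\<lambda>u. mon (F u) u) \<in> supp F \<rightarrow> carrier (free_ring Ls)"
    using fr_carrierD(2)[OF F] by (auto intro!: mon_carrier simp: supp_def)
  then have "finsum (free_ring Ls) (\<lambda>u. mon (F u) u) (supp F) = (\<lambda>w. \<Sum>u\<in>supp F. mon (F u) u w)"
    using fr_finsum fin by blast
  also have "\<dots> = F"
  proof
    fix w
    have "(\<Sum>u\<in>supp F. mon (F u) u w) = (\<Sum>u\<in>supp F. if w = u then F u else 0)"
      by (simp add: mon_def)
    also have "\<dots> = F w" using fin by (simp add: supp_def)
    finally show "(\<Sum>u\<in>supp F. mon (F u) u w) = F w" .
  qed
  finally show ?thesis by simp
qed

lemma gen_mon: "gen x = mon 1 [x]"
  by (simp add: gen_def mon_def fun_eq_iff)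

lemma conv_mon_left:
  "conv (mon k u) G = (\<lambda>w. if take (length u) w = u then k * G (drop (length u) w) else 0)"
proof
  fix w
  have "conv (mon k u) G w = (\<Sum>i\<le>length w. if i = length u then (if take (length u) w = u then k * G (drop (length u) w) else 0) else 0)"
    unfolding conv_def mon_def
    by (intro sum.cong refl) auto
  also have "\<dots> = (if take (length u) w = u then k * G (drop (length u) w) else 0)"
  proof (cases "length u \<le> length w")
    case True then show ?thesis by simp
  next
    case False
    have "take (length u) w \<noteq> u"
    proof
      assume "take (length u) w = u"
      then have "length (take (length u) w) = length u" by simp
      with False show False by simp
    qed
    then show ?thesis by simp
  qed
  finally show "conv (mon k u) G w = (if take (length u) w = u then k * G (drop (length u) w) else 0)" .
qed

lemma conv_gen_mon: "conv (gen x) (mon k u) = mon k (x # u)"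
proof (rule ext)
  fix w
  show "conv (gen x) (mon k u) w = mon k (x # u) w"
    unfolding gen_mon conv_mon_left by (cases w) (auto simp: mon_def)
qed

lemma mon_add: "mon (k + l) u = (\<lambda>w. mon k u w + mon l u w)"
  by (auto simp: mon_def)

definition wprod :: "('b, 'm) ring_scheme \<Rightarrow> ('x \<Rightarrow> 'b) \<Rightarrow> 'x list \<Rightarrow> 'b" where
  "wprod Q e w = foldr (\<lambda>x acc. e x \<otimes>\<^bsub>Q\<^esub> acc) w \<one>\<^bsub>Q\<^esub>"

definition fr_eval :: "('b, 'm) ring_scheme \<Rightarrow> ('x \<Rightarrow> 'b) \<Rightarrow> ('x list \<Rightarrow> int) \<Rightarrow> 'b" where
  "fr_eval Q e F = finsum Q (\<lambda>w. zm Q (F w) (wprod Q e w)) (supp F)"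

context ring
begin

lemma wprod_Nil [simp]: "wprod R e [] = \<one>"
  by (simp add: wprod_def)

lemma wprod_Cons [simp]: "wprod R e (x # w) = e x \<otimes> wprod R e w"
  by (simp add: wprod_def)

lemma wprod_closed:
  assumes "e ` Ls \<subseteq> carrier R" "set w \<subseteq> Ls"
  shows "wprod R e w \<in> carrier R"
  using assms(2) by (induction w) (use assms(1) in auto)

lemma wprod_append:
  assumes "e ` Ls \<subseteq> carrier R" "set u \<subseteq> Ls" "set v \<subseteq> Ls"
  shows "wprod R e (u @ v) = wprod R e u \<otimes> wprod R e v"
  using assms(2)
proof (induction u)
  case Nil
  then show ?case using wprod_closed[OF assms(1,3)] by simp
next
  case (Cons x u)
  then have "e x \<in> carrier R" using assms(1) by auto
  then show ?case using Cons wprod_closed[OF assms(1,3)] wprod_closed[OF assms(1), of u] assms(1)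
    by (simp add: m_assoc)
qed

lemma fr_eval_superset:
  assumes e: "e ` Ls \<subseteq> carrier R" and F: "F \<in> carrier (free_ring Ls)"
    and W: "finite W" "supp F \<subseteq> W" "\<And>w. w \<in> W \<Longrightarrow> set w \<subseteq> Ls"
  shows "fr_eval R e F = (\<Oplus>w\<in>W. zm R (F w) (wprod R e w))"
  unfolding fr_eval_def
proof (rule add.finprod_mono_neutral_cong_left)
  show "\<And>i. i \<in> W - supp F \<Longrightarrow> zm R (F i) (wprod R e i) = \<zero>"
    by (simp add: supp_def)
  show "(\<lambda>w. zm R (F w) (wprod R e w)) \<in> W \<rightarrow> carrier R"
    using W(3) wprod_closed[OF e] by auto
qed (use W in auto)

lemma fr_eval_closed:
  assumes e: "e ` Ls \<subseteq> carrier R" and F: "F \<in> carrier (free_ring Ls)"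
  shows "fr_eval R e F \<in> carrier R"
  unfolding fr_eval_def
  by (rule finsum_closed) (use wprod_closed[OF e] fr_carrierD(2)[OF F] in \<open>auto simp: supp_def\<close>)

lemma fr_eval_add:
  assumes e: "e ` Ls \<subseteq> carrier R" and F: "F \<in> carrier (free_ring Ls)" and G: "G \<in> carrier (free_ring Ls)"
  shows "fr_eval R e (\<lambda>w. F w + G w) = fr_eval R e F \<oplus> fr_eval R e G"
proof -
  define W where "W = supp F \<union> supp G"
  have finW: "finite W" using fr_carrierD(1)[OF F] fr_carrierD(1)[OF G] by (simp add: W_def)
  have Wl: "\<And>w. w \<in> W \<Longrightarrow> set w \<subseteq> Ls"
    using fr_carrierD(2)[OF F] fr_carrierD(2)[OF G] by (auto simp: W_def supp_def)
  have FG: "(\<lambda>w. F w + G w) \<in> carrier (free_ring Ls)" by (rule fr_add_closed[OF F G])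
  have "fr_eval R e (\<lambda>w. F w + G w) = (\<Oplus>w\<in>W. zm R (F w + G w) (wprod R e w))"
    by (rule fr_eval_superset[OF e FG finW _ Wl]) (use supp_add in \<open>auto simp: W_def\<close>)
  also have "\<dots> = (\<Oplus>w\<in>W. zm R (F w) (wprod R e w) \<oplus> zm R (G w) (wprod R e w))"
    by (intro add.finprod_cong' refl) (use Wl wprod_closed[OF e] zpow_add in auto)
  also have "\<dots> = (\<Oplus>w\<in>W. zm R (F w) (wprod R e w)) \<oplus> (\<Oplus>w\<in>W. zm R (G w) (wprod R e w))"
    by (rule finsum_addf) (use Wl wprod_closed[OF e] in auto)
  also have "\<dots> = fr_eval R e F \<oplus> fr_eval R e G"
    using fr_eval_superset[OF e F finW _ Wl] fr_eval_superset[OF e G finW _ Wl]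
    by (simp add: W_def)
  finally show ?thesis .
qed

lemma fr_eval_mon:
  assumes e: "e ` Ls \<subseteq> carrier R" and u: "set u \<subseteq> Ls"
  shows "fr_eval R e (mon k u) = zm R (k) (wprod R e u)"
proof -
  have "fr_eval R e (mon k u) = (\<Oplus>w\<in>{u}. zm R (mon k u w) (wprod R e w))"
    by (rule fr_eval_superset[OF e mon_carrier[OF u]]) (use supp_mon_sub u in auto)
  also have "\<dots> = zm R (k) (wprod R e u)"
    using wprod_closed[OF e u] by (simp add: mon_def)
  finally show ?thesis .
qed

lemma fr_eval_conv_mon:
  assumes e: "e ` Ls \<subseteq> carrier R" and u: "set u \<subseteq> Ls" and G: "G \<in> carrier (free_ring Ls)"
  shows "fr_eval R e (conv (mon k u) G) = (zm R (k) (wprod R e u)) \<otimes> fr_eval R e G"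
proof -
  define H where "H = conv (mon k u) G"
  have H: "H \<in> carrier (free_ring Ls)"
    unfolding H_def by (rule fr_conv_closed[OF mon_carrier[OF u] G])
  have Hw: "H w = (if take (length u) w = u then k * G (drop (length u) w) else 0)" for w
    unfolding H_def conv_mon_left by simp
  have finG: "finite (supp G)" using fr_carrierD(1)[OF G] .
  have Gl: "\<And>v. v \<in> supp G \<Longrightarrow> set v \<subseteq> Ls" using fr_carrierD(2)[OF G] by (auto simp: supp_def)
  have suppH: "supp H \<subseteq> (\<lambda>v. u @ v) ` supp G"
  proof
    fix w assume "w \<in> supp H"
    then have "take (length u) w = u" "G (drop (length u) w) \<noteq> 0"
      by (auto simp: supp_def Hw split: if_splits)
    then show "w \<in> (\<lambda>v. u @ v) ` supp G"
      by (auto simp: supp_def image_iff) (metis append_take_drop_id)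
  qed
  have "fr_eval R e H = (\<Oplus>w\<in>(\<lambda>v. u @ v) ` supp G. zm R (H w) (wprod R e w))"
    by (rule fr_eval_superset[OF e H _ suppH]) (use finG u Gl in \<open>auto dest!: Gl\<close>)
  also have "\<dots> = (\<Oplus>v\<in>supp G. zm R (H (u @ v)) (wprod R e (u @ v)))"
    by (rule add.finprod_reindex) (use u Gl wprod_closed[OF e] in \<open>auto simp: inj_on_def\<close>)
  also have "\<dots> = (\<Oplus>v\<in>supp G. (zm R (k) (wprod R e u)) \<otimes> (zm R (G v) (wprod R e v)))"
  proof (intro add.finprod_cong' refl)
    fix v assume v: "v \<in> supp G"
    have pu: "wprod R e u \<in> carrier R" using wprod_closed[OF e u] .
    have pv: "wprod R e v \<in> carrier R" using wprod_closed[OF e Gl[OF v]] .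
    have "zm R (H (u @ v)) (wprod R e (u @ v)) = zm R (k * G v) ((wprod R e u \<otimes> wprod R e v))"
      by (simp add: Hw wprod_append[OF e u Gl[OF v]])
    also have "\<dots> = (zm R (k) (wprod R e u)) \<otimes> (zm R (G v) (wprod R e v))"
      using pu pv by (simp add: zpow_ldistr zpow_rdistr zpow_pow mult.commute)
    finally show "zm R (H (u @ v)) (wprod R e (u @ v)) = (zm R (k) (wprod R e u)) \<otimes> (zm R (G v) (wprod R e v))" .
  next
    show "(\<lambda>v. zm R (k) (wprod R e u) \<otimes> zm R (G v) (wprod R e v)) \<in> supp G \<rightarrow> carrier R"
      using wprod_closed[OF e] u Gl by auto
  qed
  also have "\<dots> = (zm R (k) (wprod R e u)) \<otimes> (\<Oplus>v\<in>supp G. zm R (G v) (wprod R e v))"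
    by (rule finsum_rdistr[symmetric]) (use finG wprod_closed[OF e] u Gl in auto)
  finally show ?thesis by (simp add: H_def fr_eval_def)
qed

lemma fr_eval_finsum:
  assumes e: "e ` Ls \<subseteq> carrier R" and "finite A" and f: "f \<in> A \<rightarrow> carrier (free_ring Ls)"
  shows "fr_eval R e (finsum (free_ring Ls) f A) = (\<Oplus>a\<in>A. fr_eval R e (f a))"
  using assms(2) f
proof (induction A rule: finite_induct)
  case empty
  interpret FR: ring "free_ring Ls" by (rule free_ring_ring)
  show ?case by (simp add: fr_zero fr_eval_def supp_def)
next
  case (insert x A)
  interpret FR: ring "free_ring Ls" by (rule free_ring_ring)
  have fx: "f x \<in> carrier (free_ring Ls)" and fA: "f \<in> A \<rightarrow> carrier (free_ring Ls)"
    using insert.prems by auto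
  have "finsum (free_ring Ls) f (insert x A) = f x \<oplus>\<^bsub>free_ring Ls\<^esub> finsum (free_ring Ls) f A"
    using insert fx fA by (simp add: FR.finsum_insert)
  then have "fr_eval R e (finsum (free_ring Ls) f (insert x A))
     = fr_eval R e (f x) \<oplus> fr_eval R e (finsum (free_ring Ls) f A)"
    using fr_eval_add[OF e fx FR.finsum_closed[OF fA]] by (simp add: fr_add)
  then show ?case
    using insert fx fA fr_eval_closed[OF e] by (simp add: finsum_insert Pi_def)
qed

lemma fr_eval_mult:
  assumes e: "e ` Ls \<subseteq> carrier R" and F: "F \<in> carrier (free_ring Ls)" and G: "G \<in> carrier (free_ring Ls)"
  shows "fr_eval R e (conv F G) = fr_eval R e F \<otimes> fr_eval R e G"
proof -
  interpret FR: ring "free_ring Ls" by (rule free_ring_ring)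
  have finF: "finite (supp F)" using fr_carrierD(1)[OF F] .
  have Fl: "\<And>v. v \<in> supp F \<Longrightarrow> set v \<subseteq> Ls" using fr_carrierD(2)[OF F] by (auto simp: supp_def)
  have mc: "(\<lambda>u. mon (F u) u) \<in> supp F \<rightarrow> carrier (free_ring Ls)"
    using Fl by (auto intro: mon_carrier)
  define D where "D = finsum (free_ring Ls) (\<lambda>u. mon (F u) u) (supp F)"
  have dF: "F = D" unfolding D_def by (rule fr_decomp[OF F])
  have "conv F G = finsum (free_ring Ls) (\<lambda>u. mon (F u) u) (supp F) \<otimes>\<^bsub>free_ring Ls\<^esub> G"
    unfolding D_def[symmetric] using dF by (simp add: fr_mult)
  also have "\<dots> = finsum (free_ring Ls) (\<lambda>u. mon (F u) u \<otimes>\<^bsub>free_ring Ls\<^esub> G) (supp F)"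
    by (rule FR.finsum_ldistr[OF finF G mc])
  finally have eq: "conv F G = finsum (free_ring Ls) (\<lambda>u. conv (mon (F u) u) G) (supp F)"
    by (simp add: fr_mult)
  have mc2: "(\<lambda>u. conv (mon (F u) u) G) \<in> supp F \<rightarrow> carrier (free_ring Ls)"
    using Fl G by (auto intro!: fr_conv_closed mon_carrier)
  have "fr_eval R e (conv F G) = (\<Oplus>u\<in>supp F. fr_eval R e (conv (mon (F u) u) G))"
    unfolding eq by (rule fr_eval_finsum[OF e finF mc2])
  also have "\<dots> = (\<Oplus>u\<in>supp F. (zm R (F u) (wprod R e u)) \<otimes> fr_eval R e G)"
    by (intro add.finprod_cong' refl)
       (use fr_eval_conv_mon[OF e Fl G] Fl wprod_closed[OF e] fr_eval_closed[OF e G] in auto)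
  also have "\<dots> = (\<Oplus>u\<in>supp F. zm R (F u) (wprod R e u)) \<otimes> fr_eval R e G"
    by (rule finsum_ldistr[symmetric]) (use finF Fl wprod_closed[OF e] fr_eval_closed[OF e G] in auto)
  finally show ?thesis by (simp add: fr_eval_def)
qed

lemma fr_eval_one:
  assumes e: "e ` Ls \<subseteq> carrier R"
  shows "fr_eval R e (mon 1 []) = \<one>"
  using fr_eval_mon[OF e, of "[]" 1] by simp

lemma fr_eval_hom:
  assumes e: "e ` Ls \<subseteq> carrier R"
  shows "fr_eval R e \<in> ring_hom (free_ring Ls) R"
  by (rule ring_hom_memI)
     (auto simp: fr_mult fr_add fr_one fr_eval_closed[OF e] fr_eval_mult[OF e] fr_eval_add[OF e] fr_eval_one[OF e])

lemma fr_eval_gen: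
  assumes e: "e ` Ls \<subseteq> carrier R" and x: "x \<in> Ls"
  shows "fr_eval R e (gen x) = e x"
  using fr_eval_mon[OF e, of "[x]" 1] x e by (auto simp: gen_mon)

end

lemma quot_zero: "\<zero>\<^bsub>A Quot I\<^esub> = I"
  by (simp add: FactRing_def)
lemma quot_one: "\<one>\<^bsub>A Quot I\<^esub> = I +>\<^bsub>A\<^esub> \<one>\<^bsub>A\<^esub>"
  by (simp add: FactRing_def)
lemma quot_carrier: "carrier (A Quot I) = A_RCOSETS A I"
  by (simp add: FactRing_def)
lemma quot_mult: "C \<otimes>\<^bsub>A Quot I\<^esub> D = rcoset_mult A I C D"
  by (simp add: FactRing_def)
lemma quot_add: "C \<oplus>\<^bsub>A Quot I\<^esub> D = set_add A C D"
  by (simp add: FactRing_def)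

lemma quot_lift_img:
  assumes A: "ring A" and Q: "ring Q" and I: "ideal I A" and h: "h \<in> ring_hom A Q"
    and IK: "I \<subseteq> a_kernel A Q h" and x: "x \<in> carrier A"
  shows "h ` (I +>\<^bsub>A\<^esub> x) = {h x}"
proof -
  interpret A: ring A by (rule A)
  interpret Q: ring Q by (rule Q)
  interpret I: ideal I A by (rule I)
  interpret hh: ring_hom_ring A Q h by (intro ring_hom_ringI2 A Q h)
  have "h ` (I +>\<^bsub>A\<^esub> x) = (\<lambda>i. h (i \<oplus>\<^bsub>A\<^esub> x)) ` I"
    by (auto simp: a_r_coset_def r_coset_def)
  also have "\<dots> = (\<lambda>i. h x) ` I"
  proof (intro image_cong refl)
    fix i assume i: "i \<in> I"
    then have ic: "i \<in> carrier A" using I.a_Hcarr by blast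
    have "i \<in> a_kernel A Q h" using IK i by blast
    then have "h i = \<zero>\<^bsub>Q\<^esub>" unfolding a_kernel_def' by blast
    then show "h (i \<oplus>\<^bsub>A\<^esub> x) = h x" using ic x by simp
  qed
  also have "\<dots> = {h x}" using I.zero_closed by blast
  finally show ?thesis .
qed

lemma quot_lift:
  assumes A: "ring A" and Q: "ring Q" and I: "ideal I A" and h: "h \<in> ring_hom A Q"
    and IK: "I \<subseteq> a_kernel A Q h"
  shows "(\<lambda>C. the_elem (h ` C)) \<in> ring_hom (A Quot I) Q"
    and "\<And>x. x \<in> carrier A \<Longrightarrow> the_elem (h ` (I +>\<^bsub>A\<^esub> x)) = h x"
proof -
  interpret A: ring A by (rule A)
  interpret Q: ring Q by (rule Q)
  interpret I: ideal I A by (rule I)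
  interpret hh: ring_hom_ring A Q h by (intro ring_hom_ringI2 A Q h)
  have img: "\<And>x. x \<in> carrier A \<Longrightarrow> the_elem (h ` (I +>\<^bsub>A\<^esub> x)) = h x"
    using quot_lift_img[OF A Q I h IK] by simp
  show "\<And>x. x \<in> carrier A \<Longrightarrow> the_elem (h ` (I +>\<^bsub>A\<^esub> x)) = h x" by (rule img)
  have car: "C1 \<in> carrier (A Quot I) \<Longrightarrow> \<exists>x\<in>carrier A. C1 = I +>\<^bsub>A\<^esub> x" for C1
    by (auto simp: FactRing_def A_RCOSETS_def')
  show "(\<lambda>C. the_elem (h ` C)) \<in> ring_hom (A Quot I) Q"
  proof (rule ring_hom_memI)
    fix C1 assume "C1 \<in> carrier (A Quot I)"
    then obtain x where x: "x \<in> carrier A" "C1 = I +>\<^bsub>A\<^esub> x" using car by blast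
    then show "the_elem (h ` C1) \<in> carrier Q" using img by simp
  next
    fix C1 D1 assume "C1 \<in> carrier (A Quot I)" "D1 \<in> carrier (A Quot I)"
    then obtain x y where x: "x \<in> carrier A" "C1 = I +>\<^bsub>A\<^esub> x" and y: "y \<in> carrier A" "D1 = I +>\<^bsub>A\<^esub> y"
      using car by blast
    have m: "C1 \<otimes>\<^bsub>A Quot I\<^esub> D1 = I +>\<^bsub>A\<^esub> (x \<otimes>\<^bsub>A\<^esub> y)"
      using x y by (simp add: FactRing_def I.rcoset_mult_add)
    have a: "C1 \<oplus>\<^bsub>A Quot I\<^esub> D1 = I +>\<^bsub>A\<^esub> (x \<oplus>\<^bsub>A\<^esub> y)"
      using x y by (simp add: FactRing_def I.a_rcos_sum)
    show "the_elem (h ` (C1 \<otimes>\<^bsub>A Quot I\<^esub> D1)) = the_elem (h ` C1) \<otimes>\<^bsub>Q\<^esub> the_elem (h ` D1)"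
      unfolding m unfolding x(2) y(2) using x(1) y(1) by (simp add: img)
    show "the_elem (h ` (C1 \<oplus>\<^bsub>A Quot I\<^esub> D1)) = the_elem (h ` C1) \<oplus>\<^bsub>Q\<^esub> the_elem (h ` D1)"
      unfolding a unfolding x(2) y(2) using x(1) y(1) by (simp add: img)
  next
    show "the_elem (h ` \<one>\<^bsub>A Quot I\<^esub>) = \<one>\<^bsub>Q\<^esub>"
      using img[of "\<one>\<^bsub>A\<^esub>"] by (simp add: FactRing_def)
  qed
qed

lemma ideal_coset_eq_zero:
  assumes A: "ring A" and I: "ideal I A" and x: "x \<in> carrier A"
  shows "(I +>\<^bsub>A\<^esub> x = I) \<longleftrightarrow> x \<in> I"
proof -
  interpret A: ring A by (rule A)
  interpret I: ideal I A by (rule I)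
  show ?thesis
  proof
    assume "I +>\<^bsub>A\<^esub> x = I"
    then show "x \<in> I" using I.a_rcos_self[OF x] by simp
  next
    assume "x \<in> I" then show "I +>\<^bsub>A\<^esub> x = I" by (rule I.a_rcos_const)
  qed
qed

lemma ideal_coset_eq:
  assumes A: "ring A" and I: "ideal I A" and x: "x \<in> carrier A" and y: "y \<in> carrier A"
  shows "(I +>\<^bsub>A\<^esub> x = I +>\<^bsub>A\<^esub> y) \<longleftrightarrow> x \<ominus>\<^bsub>A\<^esub> y \<in> I"
proof -
  interpret A: ring A by (rule A)
  interpret I: ideal I A by (rule I)
  interpret Q: ring "A Quot I" by (rule I.quotient_is_ring)
  interpret hh: ring_hom_ring A "A Quot I" "(+>\<^bsub>A\<^esub>) I" by (rule I.rcos_ring_hom_ring)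
  have "(I +>\<^bsub>A\<^esub> x = I +>\<^bsub>A\<^esub> y) \<longleftrightarrow> (I +>\<^bsub>A\<^esub> x) \<ominus>\<^bsub>A Quot I\<^esub> (I +>\<^bsub>A\<^esub> y) = \<zero>\<^bsub>A Quot I\<^esub>"
    using x y by (simp add: Q.r_right_minus_eq)
  also have "(I +>\<^bsub>A\<^esub> x) \<ominus>\<^bsub>A Quot I\<^esub> (I +>\<^bsub>A\<^esub> y) = I +>\<^bsub>A\<^esub> (x \<ominus>\<^bsub>A\<^esub> y)"
  proof -
    have "(I +>\<^bsub>A\<^esub> x) \<ominus>\<^bsub>A Quot I\<^esub> (I +>\<^bsub>A\<^esub> y) = (I +>\<^bsub>A\<^esub> x) \<oplus>\<^bsub>A Quot I\<^esub> (I +>\<^bsub>A\<^esub> (\<ominus>\<^bsub>A\<^esub> y))"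
      unfolding a_minus_def using hh.hom_a_inv[OF y] by simp
    also have "\<dots> = I +>\<^bsub>A\<^esub> (x \<ominus>\<^bsub>A\<^esub> y)"
      unfolding a_minus_def using hh.hom_add[OF x A.a_inv_closed[OF y]] by simp
    finally show ?thesis .
  qed
  also have "\<zero>\<^bsub>A Quot I\<^esub> = I" by (rule quot_zero)
  finally show ?thesis using ideal_coset_eq_zero[OF A I] x y by simp
qed

locale loc_setup =
  fixes R :: "'a ring" and S :: "'a set"
  assumes ringR: "ring R" and S_sub: "S \<subseteq> carrier R"
begin

abbreviation FRS where "FRS \<equiv> FR R S"
abbreviation LI where "LI \<equiv> loc_ideal R S"
abbreviation U where "U \<equiv> univ_loc R S"
abbreviation lc where "lc \<equiv> loc_can R S"
abbreviation lx where "lx \<equiv> loc_x R S"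

sublocale Rr: ring R by (rule ringR)
sublocale FRr: ring FRS by (rule free_ring_ring)

lemma Inl_letter: "r \<in> carrier R \<Longrightarrow> Inl r \<in> loc_letters R S"
  by (simp add: loc_letters_def)
lemma Inr_letter: "s \<in> S \<Longrightarrow> Inr s \<in> loc_letters R S"
  by (simp add: loc_letters_def)

lemma gen_carrier: "x \<in> loc_letters R S \<Longrightarrow> gen x \<in> carrier FRS"
  by (simp add: gen_mon mon_carrier)

lemma fsub_eq:
  assumes "F \<in> carrier FRS" "G \<in> carrier FRS"
  shows "fsub F G = F \<ominus>\<^bsub>FRS\<^esub> G"
  using assms by (simp add: fsub_def a_minus_def fr_minus fr_add)

lemma fsub_carrier:
  assumes "F \<in> carrier FRS" "G \<in> carrier FRS"
  shows "fsub F G \<in> carrier FRS"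
  using assms by (simp add: fsub_eq)

lemma rel_sub: "loc_relations R S \<subseteq> carrier FRS"
proof -
  have gl: "gen (Inl r) \<in> carrier FRS" if "r \<in> carrier R" for r
    using that by (simp add: gen_carrier Inl_letter)
  have gr: "gen (Inr s) \<in> carrier FRS" if "s \<in> S" for s
    using that by (simp add: gen_carrier Inr_letter)
  have sS: "s \<in> S \<Longrightarrow> s \<in> carrier R" for s using S_sub by blast
  show ?thesis
    unfolding loc_relations_def
    by (auto intro!: fsub_carrier gl gr dest: sS)
qed

lemma LI_ideal: "ideal LI FRS"
  unfolding loc_ideal_def by (rule FRr.genideal_ideal[OF rel_sub])

lemma rel_LI: "loc_relations R S \<subseteq> LI"
  unfolding loc_ideal_def by (rule FRr.genideal_self[OF rel_sub])

lemma U_ring: "ring U"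
  unfolding univ_loc_def by (rule ideal.quotient_is_ring[OF LI_ideal])

sublocale Ur: ring U by (rule U_ring)

lemma cn_hom: "(\<lambda>F. LI +>\<^bsub>FRS\<^esub> F) \<in> ring_hom FRS U"
  unfolding univ_loc_def using ideal.rcos_ring_hom[OF LI_ideal] by simp

lemma cn_closed: "F \<in> carrier FRS \<Longrightarrow> LI +>\<^bsub>FRS\<^esub> F \<in> carrier U"
  using cn_hom by (auto simp: ring_hom_def)

lemma cn_mult: "F \<in> carrier FRS \<Longrightarrow> G \<in> carrier FRS \<Longrightarrow>
    LI +>\<^bsub>FRS\<^esub> (F \<otimes>\<^bsub>FRS\<^esub> G) = (LI +>\<^bsub>FRS\<^esub> F) \<otimes>\<^bsub>U\<^esub> (LI +>\<^bsub>FRS\<^esub> G)"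
  using cn_hom by (auto simp: ring_hom_def)

lemma cn_add: "F \<in> carrier FRS \<Longrightarrow> G \<in> carrier FRS \<Longrightarrow>
    LI +>\<^bsub>FRS\<^esub> (F \<oplus>\<^bsub>FRS\<^esub> G) = (LI +>\<^bsub>FRS\<^esub> F) \<oplus>\<^bsub>U\<^esub> (LI +>\<^bsub>FRS\<^esub> G)"
  using cn_hom by (auto simp: ring_hom_def)

lemma cn_one: "LI +>\<^bsub>FRS\<^esub> \<one>\<^bsub>FRS\<^esub> = \<one>\<^bsub>U\<^esub>"
  using cn_hom by (auto simp: ring_hom_def)

lemma cn_zero: "LI +>\<^bsub>FRS\<^esub> \<zero>\<^bsub>FRS\<^esub> = \<zero>\<^bsub>U\<^esub>"
  by (rule ring_hom_zero[OF cn_hom FRr.ring_axioms Ur.ring_axioms])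

lemma cn_minus: "F \<in> carrier FRS \<Longrightarrow> LI +>\<^bsub>FRS\<^esub> (\<ominus>\<^bsub>FRS\<^esub> F) = \<ominus>\<^bsub>U\<^esub> (LI +>\<^bsub>FRS\<^esub> F)"
proof -
  interpret hh: ring_hom_ring FRS U "\<lambda>F. LI +>\<^bsub>FRS\<^esub> F"
    by (intro ring_hom_ringI2 FRr.ring_axioms Ur.ring_axioms cn_hom)
  assume "F \<in> carrier FRS" then show ?thesis by (rule hh.hom_a_inv)
qed

lemma rel_eq:
  assumes "F \<in> carrier FRS" "G \<in> carrier FRS" "fsub F G \<in> loc_relations R S"
  shows "LI +>\<^bsub>FRS\<^esub> F = LI +>\<^bsub>FRS\<^esub> G"
proof -
  have "F \<ominus>\<^bsub>FRS\<^esub> G \<in> LI" using assms rel_LI fsub_eq by auto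
  then show ?thesis
    using ideal_coset_eq[OF FRr.ring_axioms LI_ideal assms(1,2)] by simp
qed

lemma lc_def': "lc r = LI +>\<^bsub>FRS\<^esub> gen (Inl r)"
  by (simp add: loc_can_def)
lemma lx_def': "lx s = LI +>\<^bsub>FRS\<^esub> gen (Inr s)"
  by (simp add: loc_x_def)

lemma lc_closed: "r \<in> carrier R \<Longrightarrow> lc r \<in> carrier U"
  by (simp add: lc_def' cn_closed gen_carrier Inl_letter)
lemma lx_closed: "s \<in> S \<Longrightarrow> lx s \<in> carrier U"
  by (simp add: lx_def' cn_closed gen_carrier Inr_letter)

lemma gl_carrier: "r \<in> carrier R \<Longrightarrow> gen (Inl r) \<in> carrier FRS"
  by (simp add: gen_carrier Inl_letter)
lemma gr_carrier: "s \<in> S \<Longrightarrow> gen (Inr s) \<in> carrier FRS"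
  by (simp add: gen_carrier Inr_letter)

lemma lc_add: "a \<in> carrier R \<Longrightarrow> b \<in> carrier R \<Longrightarrow> lc (a \<oplus>\<^bsub>R\<^esub> b) = lc a \<oplus>\<^bsub>U\<^esub> lc b"
proof -
  assume a: "a \<in> carrier R" and b: "b \<in> carrier R"
  have "lc (a \<oplus>\<^bsub>R\<^esub> b) = LI +>\<^bsub>FRS\<^esub> (gen (Inl a) \<oplus>\<^bsub>FRS\<^esub> gen (Inl b))"
    unfolding lc_def'
    by (rule rel_eq) (use a b in \<open>auto simp: gl_carrier loc_relations_def\<close>)
  then show ?thesis using a b by (simp add: cn_add gl_carrier lc_def')
qed

lemma lc_mult: "a \<in> carrier R \<Longrightarrow> b \<in> carrier R \<Longrightarrow> lc (a \<otimes>\<^bsub>R\<^esub> b) = lc a \<otimes>\<^bsub>U\<^esub> lc b"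
proof -
  assume a: "a \<in> carrier R" and b: "b \<in> carrier R"
  have "lc (a \<otimes>\<^bsub>R\<^esub> b) = LI +>\<^bsub>FRS\<^esub> (gen (Inl a) \<otimes>\<^bsub>FRS\<^esub> gen (Inl b))"
    unfolding lc_def'
    by (rule rel_eq) (use a b in \<open>auto simp: gl_carrier loc_relations_def\<close>)
  then show ?thesis using a b by (simp add: cn_mult gl_carrier lc_def')
qed

lemma lc_one: "lc \<one>\<^bsub>R\<^esub> = \<one>\<^bsub>U\<^esub>"
proof -
  have "lc \<one>\<^bsub>R\<^esub> = LI +>\<^bsub>FRS\<^esub> \<one>\<^bsub>FRS\<^esub>"
    unfolding lc_def'
    by (rule rel_eq) (auto simp: gl_carrier loc_relations_def)
  then show ?thesis by (simp add: cn_one)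
qed

lemma lc_hom: "lc \<in> ring_hom R U"
  by (rule ring_hom_memI) (auto simp: lc_closed lc_add lc_mult lc_one)

lemma lc_lx: "s \<in> S \<Longrightarrow> lc s \<otimes>\<^bsub>U\<^esub> lx s = \<one>\<^bsub>U\<^esub>"
proof -
  assume s: "s \<in> S"
  then have sc: "s \<in> carrier R" using S_sub by blast
  have "LI +>\<^bsub>FRS\<^esub> (gen (Inl s) \<otimes>\<^bsub>FRS\<^esub> gen (Inr s)) = LI +>\<^bsub>FRS\<^esub> \<one>\<^bsub>FRS\<^esub>"
    by (rule rel_eq) (use s sc in \<open>auto simp: gl_carrier gr_carrier loc_relations_def\<close>)
  then show ?thesis using s sc by (simp add: cn_mult cn_one gl_carrier gr_carrier lc_def' lx_def')
qed

lemma lx_lc: "s \<in> S \<Longrightarrow> lx s \<otimes>\<^bsub>U\<^esub> lc s = \<one>\<^bsub>U\<^esub>"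
proof -
  assume s: "s \<in> S"
  then have sc: "s \<in> carrier R" using S_sub by blast
  have "LI +>\<^bsub>FRS\<^esub> (gen (Inr s) \<otimes>\<^bsub>FRS\<^esub> gen (Inl s)) = LI +>\<^bsub>FRS\<^esub> \<one>\<^bsub>FRS\<^esub>"
    by (rule rel_eq) (use s sc in \<open>auto simp: gl_carrier gr_carrier loc_relations_def\<close>)
  then show ?thesis using s sc by (simp add: cn_mult cn_one gl_carrier gr_carrier lc_def' lx_def')
qed

lemma lc_Units: "s \<in> S \<Longrightarrow> lc s \<in> Units U"
  using lc_lx lx_lc lc_closed lx_closed S_sub unfolding Units_def by blast

lemma lc_inv: "s \<in> S \<Longrightarrow> inv\<^bsub>U\<^esub> (lc s) = lx s"
  using Ur.inv_unique'[of "lc s" "lx s"] lc_lx lx_lc lc_closed lx_closed S_sub by auto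

lemma univ_prop:
  fixes Q :: "'q ring"
  assumes Q: "ring Q" and f: "f \<in> ring_hom R Q" and un: "\<forall>s\<in>S. f s \<in> Units Q"
  shows "\<exists>h. h \<in> ring_hom U Q \<and> (\<forall>r\<in>carrier R. h (lc r) = f r) \<and> (\<forall>s\<in>S. h (lx s) = inv\<^bsub>Q\<^esub> (f s))"
proof -
  interpret Q: ring Q by (rule Q)
  interpret fh: ring_hom_ring R Q f by (intro ring_hom_ringI2 Rr.ring_axioms Q f)
  define e where "e = case_sum f (\<lambda>s. inv\<^bsub>Q\<^esub> (f s))"
  have e: "e ` loc_letters R S \<subseteq> carrier Q"
    using un by (auto simp: e_def loc_letters_def)
  define ev where "ev = fr_eval Q e"
  have evh: "ev \<in> ring_hom FRS Q" unfolding ev_def by (rule Q.fr_eval_hom[OF e])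
  interpret evh: ring_hom_ring FRS Q ev by (intro ring_hom_ringI2 FRr.ring_axioms Q evh)
  have evg: "ev (gen x) = e x" if "x \<in> loc_letters R S" for x
    unfolding ev_def by (rule Q.fr_eval_gen[OF e that])
  have evl: "ev (gen (Inl r)) = f r" if "r \<in> carrier R" for r
    using evg[OF Inl_letter[OF that]] by (simp add: e_def)
  have evr: "ev (gen (Inr s)) = inv\<^bsub>Q\<^esub> (f s)" if "s \<in> S" for s
    using evg[OF Inr_letter[OF that]] by (simp add: e_def)
  have kern: "fsub F G \<in> a_kernel FRS Q ev"
    if F: "F \<in> carrier FRS" and G: "G \<in> carrier FRS" and eq: "ev F = ev G" for F G
  proof -
    have "ev (fsub F G) = ev F \<oplus>\<^bsub>Q\<^esub> \<ominus>\<^bsub>Q\<^esub> ev G"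
      using F G by (simp add: fsub_eq a_minus_def)
    also have "\<dots> = \<zero>\<^bsub>Q\<^esub>" using eq G by (simp add: Q.r_neg)
    finally show ?thesis using fsub_carrier[OF F G] unfolding a_kernel_def' by blast
  qed
  have sc: "s \<in> S \<Longrightarrow> s \<in> carrier R" for s using S_sub by blast
  have relK: "loc_relations R S \<subseteq> a_kernel FRS Q ev"
  proof
    fix z assume "z \<in> loc_relations R S"
    then consider
      (a) a b where "a \<in> carrier R" "b \<in> carrier R" "z = fsub (gen (Inl (a \<oplus>\<^bsub>R\<^esub> b))) (gen (Inl a) \<oplus>\<^bsub>FRS\<^esub> gen (Inl b))"
    | (m) a b where "a \<in> carrier R" "b \<in> carrier R" "z = fsub (gen (Inl (a \<otimes>\<^bsub>R\<^esub> b))) (gen (Inl a) \<otimes>\<^bsub>FRS\<^esub> gen (Inl b))"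
    | (o) "z = fsub (gen (Inl \<one>\<^bsub>R\<^esub>)) \<one>\<^bsub>FRS\<^esub>"
    | (l) s where "s \<in> S" "z = fsub (gen (Inl s) \<otimes>\<^bsub>FRS\<^esub> gen (Inr s)) \<one>\<^bsub>FRS\<^esub>"
    | (r) s where "s \<in> S" "z = fsub (gen (Inr s) \<otimes>\<^bsub>FRS\<^esub> gen (Inl s)) \<one>\<^bsub>FRS\<^esub>"
      unfolding loc_relations_def by blast
    then show "z \<in> a_kernel FRS Q ev"
    proof cases
      case a then show ?thesis
        by (simp only:) (rule kern, auto simp: gl_carrier evl)
    next
      case m then show ?thesis
        by (simp only:) (rule kern, auto simp: gl_carrier evl)
    next
      case o then show ?thesis
        by (simp only:) (rule kern, auto simp: gl_carrier evl)
    next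
      case l then show ?thesis
        by (simp only:) (rule kern, auto simp: gl_carrier gr_carrier evl evr sc un)
    next
      case r then show ?thesis
        by (simp only:) (rule kern, auto simp: gl_carrier gr_carrier evl evr sc un)
    qed
  qed
  have IK: "LI \<subseteq> a_kernel FRS Q ev"
    unfolding loc_ideal_def
    by (rule FRr.genideal_minimal[OF evh.kernel_is_ideal relK])
  define h where "h = (\<lambda>C. the_elem (ev ` C))"
  have hh: "h \<in> ring_hom U Q"
    unfolding h_def univ_loc_def by (rule quot_lift(1)[OF FRr.ring_axioms Q LI_ideal evh IK])
  have hv: "h (LI +>\<^bsub>FRS\<^esub> F) = ev F" if "F \<in> carrier FRS" for F
    unfolding h_def by (rule quot_lift(2)[OF FRr.ring_axioms Q LI_ideal evh IK that])
  show ?thesis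
    by (intro exI[of _ h] conjI hh ballI)
       (auto simp: lc_def' lx_def' hv gl_carrier gr_carrier evl evr)
qed

end

locale loc_ore = loc_setup +
  assumes ore: "right_ore_set R S"
begin

lemma one_S: "\<one>\<^bsub>R\<^esub> \<in> S"
  using ore by (simp add: right_ore_set_def mult_set_def)
lemma mult_S: "s \<in> S \<Longrightarrow> t \<in> S \<Longrightarrow> s \<otimes>\<^bsub>R\<^esub> t \<in> S"
  using ore by (simp add: right_ore_set_def mult_set_def)
lemma ore_cond: "r \<in> carrier R \<Longrightarrow> s \<in> S \<Longrightarrow> \<exists>t\<in>S. \<exists>r'\<in>carrier R. r \<otimes>\<^bsub>R\<^esub> t = s \<otimes>\<^bsub>R\<^esub> r'"
  using ore by (simp add: right_ore_set_def)
lemma sc: "s \<in> S \<Longrightarrow> s \<in> carrier R"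
  using S_sub by blast

lemma inv_uniq:
  assumes s: "s \<in> S" and y: "y \<in> carrier U" and e: "lc s \<otimes>\<^bsub>U\<^esub> y = \<one>\<^bsub>U\<^esub>"
  shows "y = lx s"
proof -
  have "y = (lx s \<otimes>\<^bsub>U\<^esub> lc s) \<otimes>\<^bsub>U\<^esub> y" using lx_lc[OF s] y by simp
  also have "\<dots> = lx s \<otimes>\<^bsub>U\<^esub> (lc s \<otimes>\<^bsub>U\<^esub> y)"
    using lx_closed[OF s] lc_closed[OF sc[OF s]] y by (simp add: Ur.m_assoc)
  also have "\<dots> = lx s" using e lx_closed[OF s] by simp
  finally show ?thesis .
qed

lemma lx_one: "lx \<one>\<^bsub>R\<^esub> = \<one>\<^bsub>U\<^esub>"
  using inv_uniq[OF one_S, of "\<one>\<^bsub>U\<^esub>"] by (simp add: lc_one)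

lemma lx_mult:
  assumes s: "s \<in> S" and t: "t \<in> S"
  shows "lx t \<otimes>\<^bsub>U\<^esub> lx s = lx (s \<otimes>\<^bsub>R\<^esub> t)"
proof (rule inv_uniq[OF mult_S[OF s t]])
  show "lx t \<otimes>\<^bsub>U\<^esub> lx s \<in> carrier U" using lx_closed s t by simp
  have "lc (s \<otimes>\<^bsub>R\<^esub> t) \<otimes>\<^bsub>U\<^esub> (lx t \<otimes>\<^bsub>U\<^esub> lx s) = lc s \<otimes>\<^bsub>U\<^esub> ((lc t \<otimes>\<^bsub>U\<^esub> lx t) \<otimes>\<^bsub>U\<^esub> lx s)"
    using lc_closed lx_closed sc s t by (simp add: lc_mult Ur.m_assoc)
  also have "\<dots> = \<one>\<^bsub>U\<^esub>" using lc_lx s t lx_closed by simp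
  finally show "lc (s \<otimes>\<^bsub>R\<^esub> t) \<otimes>\<^bsub>U\<^esub> (lx t \<otimes>\<^bsub>U\<^esub> lx s) = \<one>\<^bsub>U\<^esub>" .
qed

definition Gs where "Gs = {q. \<exists>r\<in>carrier R. \<exists>s\<in>S. q = lc r \<otimes>\<^bsub>U\<^esub> lx s}"

lemma GsI: "r \<in> carrier R \<Longrightarrow> s \<in> S \<Longrightarrow> lc r \<otimes>\<^bsub>U\<^esub> lx s \<in> Gs"
  unfolding Gs_def by blast

lemma G_lc: "r \<in> carrier R \<Longrightarrow> lc r \<in> Gs"
  using GsI[OF _ one_S, of r] lc_closed by (simp add: lx_one)

lemma G_lx: "s \<in> S \<Longrightarrow> lx s \<in> Gs"
  using GsI[OF Rr.one_closed, of s] lx_closed by (simp add: lc_one)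

lemma G_neg: "q \<in> Gs \<Longrightarrow> \<ominus>\<^bsub>U\<^esub> q \<in> Gs"
proof -
  assume "q \<in> Gs"
  then obtain r s where r: "r \<in> carrier R" and s: "s \<in> S" and q: "q = lc r \<otimes>\<^bsub>U\<^esub> lx s"
    unfolding Gs_def by blast
  have "\<ominus>\<^bsub>U\<^esub> q = lc (\<ominus>\<^bsub>R\<^esub> r) \<otimes>\<^bsub>U\<^esub> lx s"
  proof -
    interpret hh: ring_hom_ring R U lc by (intro ring_hom_ringI2 Rr.ring_axioms Ur.ring_axioms lc_hom)
    show ?thesis using r s lc_closed lx_closed by (simp add: q Ur.l_minus)
  qed
  then show ?thesis using GsI r s by simp
qed

lemma G_add:
  assumes q1: "q1 \<in> Gs" and q2: "q2 \<in> Gs"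
  shows "q1 \<oplus>\<^bsub>U\<^esub> q2 \<in> Gs"
proof -
  obtain r1 s1 where r1: "r1 \<in> carrier R" and s1: "s1 \<in> S" and q1e: "q1 = lc r1 \<otimes>\<^bsub>U\<^esub> lx s1"
    using q1 unfolding Gs_def by blast
  obtain r2 s2 where r2: "r2 \<in> carrier R" and s2: "s2 \<in> S" and q2e: "q2 = lc r2 \<otimes>\<^bsub>U\<^esub> lx s2"
    using q2 unfolding Gs_def by blast
  obtain t r' where t: "t \<in> S" and r': "r' \<in> carrier R" and eq: "s1 \<otimes>\<^bsub>R\<^esub> t = s2 \<otimes>\<^bsub>R\<^esub> r'"
    using ore_cond[OF sc[OF s1] s2] by blast
  define m where "m = s1 \<otimes>\<^bsub>R\<^esub> t"
  have m: "m \<in> S" unfolding m_def using mult_S s1 t by simp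
  have mc: "m \<in> carrier R" using sc[OF m] .
  note cl = lc_closed lx_closed sc
  have e1: "lx s1 = lc t \<otimes>\<^bsub>U\<^esub> lx m"
  proof (rule inv_uniq[OF s1, symmetric])
    show "lc t \<otimes>\<^bsub>U\<^esub> lx m \<in> carrier U" using cl t m by simp
    have "lc s1 \<otimes>\<^bsub>U\<^esub> (lc t \<otimes>\<^bsub>U\<^esub> lx m) = lc m \<otimes>\<^bsub>U\<^esub> lx m"
      using cl s1 t m by (simp add: m_def lc_mult Ur.m_assoc)
    also have "\<dots> = \<one>\<^bsub>U\<^esub>" by (rule lc_lx[OF m])
    finally show "lc s1 \<otimes>\<^bsub>U\<^esub> (lc t \<otimes>\<^bsub>U\<^esub> lx m) = \<one>\<^bsub>U\<^esub>" .
  qed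
  have e2: "lx s2 = lc r' \<otimes>\<^bsub>U\<^esub> lx m"
  proof (rule inv_uniq[OF s2, symmetric])
    show "lc r' \<otimes>\<^bsub>U\<^esub> lx m \<in> carrier U" using cl r' m by simp
    have "lc s2 \<otimes>\<^bsub>U\<^esub> (lc r' \<otimes>\<^bsub>U\<^esub> lx m) = lc (s2 \<otimes>\<^bsub>R\<^esub> r') \<otimes>\<^bsub>U\<^esub> lx m"
      using cl s2 r' m by (simp add: lc_mult Ur.m_assoc)
    also have "\<dots> = lc m \<otimes>\<^bsub>U\<^esub> lx m" by (simp add: m_def eq)
    also have "\<dots> = \<one>\<^bsub>U\<^esub>" by (rule lc_lx[OF m])
    finally show "lc s2 \<otimes>\<^bsub>U\<^esub> (lc r' \<otimes>\<^bsub>U\<^esub> lx m) = \<one>\<^bsub>U\<^esub>" .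
  qed
  have "q1 \<oplus>\<^bsub>U\<^esub> q2 = (lc r1 \<otimes>\<^bsub>U\<^esub> lc t) \<otimes>\<^bsub>U\<^esub> lx m \<oplus>\<^bsub>U\<^esub> (lc r2 \<otimes>\<^bsub>U\<^esub> lc r') \<otimes>\<^bsub>U\<^esub> lx m"
    using cl r1 r2 t r' m by (simp add: q1e q2e e1 e2 Ur.m_assoc)
  also have "\<dots> = lc (r1 \<otimes>\<^bsub>R\<^esub> t \<oplus>\<^bsub>R\<^esub> r2 \<otimes>\<^bsub>R\<^esub> r') \<otimes>\<^bsub>U\<^esub> lx m"
    using cl r1 r2 t r' m by (simp add: lc_mult lc_add Ur.l_distr)
  finally show ?thesis using GsI[OF _ m] r1 r2 t r' sc by simp
qed

lemma G_mult:
  assumes q1: "q1 \<in> Gs" and q2: "q2 \<in> Gs"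
  shows "q1 \<otimes>\<^bsub>U\<^esub> q2 \<in> Gs"
proof -
  obtain r1 s1 where r1: "r1 \<in> carrier R" and s1: "s1 \<in> S" and q1e: "q1 = lc r1 \<otimes>\<^bsub>U\<^esub> lx s1"
    using q1 unfolding Gs_def by blast
  obtain r2 s2 where r2: "r2 \<in> carrier R" and s2: "s2 \<in> S" and q2e: "q2 = lc r2 \<otimes>\<^bsub>U\<^esub> lx s2"
    using q2 unfolding Gs_def by blast
  obtain t r' where t: "t \<in> S" and r': "r' \<in> carrier R" and eq: "r2 \<otimes>\<^bsub>R\<^esub> t = s1 \<otimes>\<^bsub>R\<^esub> r'"
    using ore_cond[OF r2 s1] by blast
  note cl = lc_closed lx_closed sc
  have e1: "lx s1 \<otimes>\<^bsub>U\<^esub> lc r2 = lc r' \<otimes>\<^bsub>U\<^esub> lx t"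
  proof -
    have "lx s1 \<otimes>\<^bsub>U\<^esub> lc r2 = lx s1 \<otimes>\<^bsub>U\<^esub> lc r2 \<otimes>\<^bsub>U\<^esub> (lc t \<otimes>\<^bsub>U\<^esub> lx t)"
      using cl s1 r2 t by (simp add: lc_lx)
    also have "\<dots> = lx s1 \<otimes>\<^bsub>U\<^esub> lc (r2 \<otimes>\<^bsub>R\<^esub> t) \<otimes>\<^bsub>U\<^esub> lx t"
      using cl s1 r2 t by (simp add: lc_mult Ur.m_assoc)
    also have "\<dots> = (lx s1 \<otimes>\<^bsub>U\<^esub> lc s1) \<otimes>\<^bsub>U\<^esub> lc r' \<otimes>\<^bsub>U\<^esub> lx t"
      using cl s1 r' t by (simp add: eq lc_mult Ur.m_assoc)
    also have "\<dots> = lc r' \<otimes>\<^bsub>U\<^esub> lx t"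
      using cl s1 r' t by (simp add: lx_lc)
    finally show ?thesis .
  qed
  have "q1 \<otimes>\<^bsub>U\<^esub> q2 = lc r1 \<otimes>\<^bsub>U\<^esub> (lx s1 \<otimes>\<^bsub>U\<^esub> lc r2) \<otimes>\<^bsub>U\<^esub> lx s2"
    using cl r1 r2 s1 s2 by (simp add: q1e q2e Ur.m_assoc)
  also have "\<dots> = lc (r1 \<otimes>\<^bsub>R\<^esub> r') \<otimes>\<^bsub>U\<^esub> (lx t \<otimes>\<^bsub>U\<^esub> lx s2)"
    using cl r1 r' t s2 by (simp add: e1 lc_mult Ur.m_assoc)
  also have "\<dots> = lc (r1 \<otimes>\<^bsub>R\<^esub> r') \<otimes>\<^bsub>U\<^esub> lx (s2 \<otimes>\<^bsub>R\<^esub> t)"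
    using lx_mult[OF s2 t] by simp
  finally show ?thesis using GsI mult_S s2 t r1 r' by simp
qed

lemma G_one: "\<one>\<^bsub>U\<^esub> \<in> Gs"
  using G_lc[OF Rr.one_closed] by (simp add: lc_one)

lemma G_zero: "\<zero>\<^bsub>U\<^esub> \<in> Gs"
proof -
  have "lc \<zero>\<^bsub>R\<^esub> = \<zero>\<^bsub>U\<^esub>" by (rule ring_hom_zero[OF lc_hom Rr.ring_axioms Ur.ring_axioms])
  then show ?thesis using G_lc[OF Rr.zero_closed] by simp
qed

lemma mon_nil_carrier: "mon j [] \<in> carrier FRS"
  by (rule mon_carrier) simp

lemma cn_mon_nil: "LI +>\<^bsub>FRS\<^esub> mon k [] \<in> Gs"
proof (induction k rule: int_induct[where k=0])
  case base
  have "mon 0 [] = \<zero>\<^bsub>FRS\<^esub>" by (simp add: fr_zero mon_def fun_eq_iff)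
  then show ?case using G_zero cn_zero by simp
next
  case (step1 i)
  have "mon (i + 1) [] = mon i [] \<oplus>\<^bsub>FRS\<^esub> \<one>\<^bsub>FRS\<^esub>"
    by (simp add: fr_add fr_one mon_def fun_eq_iff)
  then show ?case
    using step1 G_add G_one cn_add[OF mon_nil_carrier FRr.one_closed] cn_one by simp
next
  case (step2 i)
  have mo: "\<ominus>\<^bsub>FRS\<^esub> \<one>\<^bsub>FRS\<^esub> = (\<lambda>w. - mon 1 [] w)"
    using fr_minus[OF mon_nil_carrier[of 1]] by (simp add: fr_one)
  have "mon (i - 1) [] = mon i [] \<oplus>\<^bsub>FRS\<^esub> \<ominus>\<^bsub>FRS\<^esub> \<one>\<^bsub>FRS\<^esub>"
    unfolding mo by (simp add: fr_add mon_def fun_eq_iff)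
  then show ?case
    using step2 G_add G_neg[OF G_one] cn_add[OF mon_nil_carrier FRr.a_inv_closed[OF FRr.one_closed]] cn_one
      cn_minus[OF FRr.one_closed] by simp
qed

lemma cn_gen:
  assumes x: "x \<in> loc_letters R S"
  shows "LI +>\<^bsub>FRS\<^esub> gen x \<in> Gs"
proof -
  consider r where "r \<in> carrier R" "x = Inl r" | s where "s \<in> S" "x = Inr s"
    using x unfolding loc_letters_def by blast
  then show ?thesis
  proof cases
    case 1 then show ?thesis using G_lc[of r] by (simp add: lc_def')
  next
    case 2 then show ?thesis using G_lx[of s] by (simp add: lx_def')
  qed
qed

lemma cn_mon: "set u \<subseteq> loc_letters R S \<Longrightarrow> LI +>\<^bsub>FRS\<^esub> mon k u \<in> Gs"
proof (induction u)
  case Nil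
  show ?case by (rule cn_mon_nil)
next
  case (Cons x u)
  have "mon k (x # u) = gen x \<otimes>\<^bsub>FRS\<^esub> mon k u"
    by (simp add: fr_mult conv_gen_mon)
  then show ?case
    using Cons G_mult cn_gen cn_mult[OF gen_carrier mon_carrier] by simp
qed

lemma cn_finsum:
  assumes "finite A" "f \<in> A \<rightarrow> carrier FRS" "\<And>a. a \<in> A \<Longrightarrow> LI +>\<^bsub>FRS\<^esub> f a \<in> Gs"
  shows "LI +>\<^bsub>FRS\<^esub> finsum FRS f A \<in> Gs"
  using assms
proof (induction A rule: finite_induct)
  case empty
  then show ?case using G_zero cn_zero by simp
next
  case (insert x A)
  then have fx: "f x \<in> carrier FRS" and fA: "f \<in> A \<rightarrow> carrier FRS" by auto
  have "finsum FRS f (insert x A) = f x \<oplus>\<^bsub>FRS\<^esub> finsum FRS f A"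
    using insert fx fA by (simp add: FRr.finsum_insert)
  then show ?case
    using insert fx fA G_add cn_add[OF fx FRr.finsum_closed[OF fA]] by simp
qed

lemma loc_gen:
  assumes q: "q \<in> carrier U"
  shows "\<exists>r\<in>carrier R. \<exists>s\<in>S. q = lc r \<otimes>\<^bsub>U\<^esub> lx s"
proof -
  obtain F where F: "F \<in> carrier FRS" and qF: "q = LI +>\<^bsub>FRS\<^esub> F"
    using q by (auto simp: univ_loc_def quot_carrier A_RCOSETS_def')
  have fin: "finite (supp F)" using fr_carrierD(1)[OF F] .
  have Fl: "\<And>v. v \<in> supp F \<Longrightarrow> set v \<subseteq> loc_letters R S"
    using fr_carrierD(2)[OF F] by (auto simp: supp_def)
  define D where "D = finsum FRS (\<lambda>u. mon (F u) u) (supp F)"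
  have FD: "F = D" unfolding D_def by (rule fr_decomp[OF F])
  have "LI +>\<^bsub>FRS\<^esub> D \<in> Gs"
    unfolding D_def
    by (rule cn_finsum[OF fin]) (use Fl in \<open>auto intro: mon_carrier cn_mon\<close>)
  then show ?thesis using qF FD unfolding Gs_def by simp
qed

end

locale ore_reg = ring +
  fixes T
  assumes T_sub: "T \<subseteq> carrier R" and one_T: "\<one> \<in> T"
    and mult_T: "\<lbrakk>s \<in> T; t \<in> T\<rbrakk> \<Longrightarrow> s \<otimes> t \<in> T"
    and ore: "\<lbrakk>r \<in> carrier R; s \<in> T\<rbrakk> \<Longrightarrow> \<exists>t\<in>T. \<exists>r'\<in>carrier R. r \<otimes> t = s \<otimes> r'"
    and lreg: "\<lbrakk>s \<in> T; x \<in> carrier R; s \<otimes> x = \<zero>\<rbrakk> \<Longrightarrow> x = \<zero>"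
    and rreg: "\<lbrakk>s \<in> T; x \<in> carrier R; x \<otimes> s = \<zero>\<rbrakk> \<Longrightarrow> x = \<zero>"
begin

lemma Tc [simp]: "s \<in> T \<Longrightarrow> s \<in> carrier R"
  using T_sub by blast

lemma lcancel:
  assumes s: "s \<in> T" and x: "x \<in> carrier R" and y: "y \<in> carrier R" and e: "s \<otimes> x = s \<otimes> y"
  shows "x = y"
proof -
  have "s \<otimes> (x \<ominus> y) = s \<otimes> x \<ominus> s \<otimes> y"
    using s x y by (simp add: a_minus_def r_distr r_minus)
  also have "\<dots> = \<zero>" using e s y by simp
  finally have "x \<ominus> y = \<zero>" using lreg[OF s] x y by simp
  then show ?thesis using x y by simp
qed

lemma rcancel:
  assumes s: "s \<in> T" and x: "x \<in> carrier R" and y: "y \<in> carrier R" and e: "x \<otimes> s = y \<otimes> s"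
  shows "x = y"
proof -
  have "(x \<ominus> y) \<otimes> s = x \<otimes> s \<ominus> y \<otimes> s"
    using s x y by (simp add: a_minus_def l_distr l_minus)
  also have "\<dots> = \<zero>" using e s y by simp
  finally have "x \<ominus> y = \<zero>" using rreg[OF s] x y by simp
  then show ?thesis using x y by simp
qed

lemma common:
  assumes s: "s \<in> T" and t: "t \<in> T"
  shows "\<exists>c\<in>carrier R. \<exists>d\<in>carrier R. s \<otimes> c = t \<otimes> d \<and> s \<otimes> c \<in> T"
proof -
  obtain u r' where u: "u \<in> T" and r': "r' \<in> carrier R" and e: "s \<otimes> u = t \<otimes> r'"
    using ore[OF Tc[OF s] t] by blast
  then show ?thesis using mult_T[OF s u] by (intro bexI[of _ u] bexI[of _ r']) auto
qed

definition req :: "'a \<Rightarrow> 'a \<Rightarrow> 'a \<Rightarrow> 'a \<Rightarrow> bool" where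
  "req a s b t \<longleftrightarrow> a \<in> carrier R \<and> s \<in> T \<and> b \<in> carrier R \<and> t \<in> T \<and>
     (\<exists>c\<in>carrier R. \<exists>d\<in>carrier R. s \<otimes> c = t \<otimes> d \<and> s \<otimes> c \<in> T \<and> a \<otimes> c = b \<otimes> d)"

lemma allchar:
  assumes r: "req a s b t" and c: "c \<in> carrier R" and d: "d \<in> carrier R"
    and e: "s \<otimes> c = t \<otimes> d" and m: "s \<otimes> c \<in> T"
  shows "a \<otimes> c = b \<otimes> d"
proof -
  obtain c0 d0 where c0: "c0 \<in> carrier R" and d0: "d0 \<in> carrier R" and e0: "s \<otimes> c0 = t \<otimes> d0"
    and m0: "s \<otimes> c0 \<in> T" and a0: "a \<otimes> c0 = b \<otimes> d0"
    using r unfolding req_def by blast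
  have a: "a \<in> carrier R" and s: "s \<in> T" and b: "b \<in> carrier R" and t: "t \<in> T"
    using r unfolding req_def by auto
  obtain v w where v: "v \<in> T" and w: "w \<in> carrier R" and vw: "(s \<otimes> c) \<otimes> v = (s \<otimes> c0) \<otimes> w"
    using ore[OF Tc[OF m] m0] by blast
  have vc: "v \<in> carrier R" using v by simp
  have cv: "c \<otimes> v = c0 \<otimes> w"
    by (rule lcancel[OF s]) (use vw s c c0 vc w in \<open>simp_all add: m_assoc\<close>)
  have dv: "d \<otimes> v = d0 \<otimes> w"
  proof (rule lcancel[OF t])
    show "t \<otimes> (d \<otimes> v) = t \<otimes> (d0 \<otimes> w)"
      using vw s c c0 vc w t d d0 e e0 by (simp add: m_assoc[symmetric])
  qed (use d d0 vc w in auto)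
  have eqv: "(a \<otimes> c) \<otimes> v = (b \<otimes> d) \<otimes> v"
  proof -
    have "(a \<otimes> c) \<otimes> v = a \<otimes> (c0 \<otimes> w)" using a c vc cv by (simp add: m_assoc)
    also have "\<dots> = (b \<otimes> d0) \<otimes> w" using a c0 w a0 by (simp add: m_assoc[symmetric])
    also have "\<dots> = b \<otimes> (d \<otimes> v)" using b d0 w dv by (simp add: m_assoc)
    also have "\<dots> = (b \<otimes> d) \<otimes> v" using b d vc by (simp add: m_assoc)
    finally show ?thesis .
  qed
  show ?thesis by (rule rcancel[OF v _ _ eqv]) (use a b c d in auto)
qed

lemma req_refl: "a \<in> carrier R \<Longrightarrow> s \<in> T \<Longrightarrow> req a s a s"
  unfolding req_def by (intro conjI bexI[of _ \<one>]) auto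

lemma req_sym: "req a s b t \<Longrightarrow> req b t a s"
  unfolding req_def by (metis (no_types, lifting))

lemma req_trans:
  assumes r1: "req a s b t" and r2: "req b t e p"
  shows "req a s e p"
proof -
  have a: "a \<in> carrier R" and s: "s \<in> T" and b: "b \<in> carrier R" and t: "t \<in> T"
    and e: "e \<in> carrier R" and p: "p \<in> T"
    using r1 r2 unfolding req_def by auto
  obtain c d where c: "c \<in> carrier R" and d: "d \<in> carrier R" and cd: "s \<otimes> c = p \<otimes> d"
    and m: "s \<otimes> c \<in> T"
    using common[OF s p] by blast
  obtain v w where v: "v \<in> T" and w: "w \<in> carrier R" and vw: "(s \<otimes> c) \<otimes> v = t \<otimes> w"
    using ore[OF Tc[OF m] t] by blast
  have vc: "v \<in> carrier R" using v by simp
  have m2: "s \<otimes> (c \<otimes> v) \<in> T" using mult_T[OF m v] s c vc by (simp add: m_assoc)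
  have h1: "a \<otimes> (c \<otimes> v) = b \<otimes> w"
    by (rule allchar[OF r1]) (use c vc w vw m2 s in \<open>simp_all add: m_assoc\<close>)
  have h2: "b \<otimes> w = e \<otimes> (d \<otimes> v)"
  proof (rule allchar[OF r2])
    show "t \<otimes> w = p \<otimes> (d \<otimes> v)" using vw cd s c vc p d by (simp add: m_assoc[symmetric])
    show "t \<otimes> w \<in> T" using vw mult_T[OF m v] by simp
  qed (use w d vc in auto)
  have eqv: "(a \<otimes> c) \<otimes> v = (e \<otimes> d) \<otimes> v"
    using h1 h2 a c vc e d by (simp add: m_assoc)
  have "a \<otimes> c = e \<otimes> d" by (rule rcancel[OF v _ _ eqv]) (use a c e d in auto)
  then show ?thesis unfolding req_def using a s e p c d cd m by blast
qed

lemma req_expand: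
  assumes a: "a \<in> carrier R" and s: "s \<in> T" and c: "c \<in> carrier R" and m: "s \<otimes> c \<in> T"
  shows "req a s (a \<otimes> c) (s \<otimes> c)"
  unfolding req_def using assms by (intro conjI bexI[of _ c] bexI[of _ \<one>]) auto

definition cls :: "'a \<Rightarrow> 'a \<Rightarrow> ('a \<times> 'a) set" where
  "cls a s = {(b, t). req a s b t}"

lemma cls_eq:
  assumes "a \<in> carrier R" "s \<in> T" "b \<in> carrier R" "t \<in> T"
  shows "cls a s = cls b t \<longleftrightarrow> req a s b t"
proof
  assume "cls a s = cls b t"
  then have "(b, t) \<in> cls a s" using req_refl[of b t] assms by (simp add: cls_def)
  then show "req a s b t" by (simp add: cls_def)
next
  assume r: "req a s b t"
  show "cls a s = cls b t"
    unfolding cls_def using r req_sym req_trans by blast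
qed

lemma cls_eqI: "req a s b t \<Longrightarrow> cls a s = cls b t"
  using cls_eq unfolding req_def by blast

lemma cls_expand:
  assumes "a \<in> carrier R" "s \<in> T" "c \<in> carrier R" "s \<otimes> c \<in> T"
  shows "cls a s = cls (a \<otimes> c) (s \<otimes> c)"
  by (rule cls_eqI[OF req_expand[OF assms]])

definition Lc :: "('a \<times> 'a) set set" where
  "Lc = {cls a s | a s. a \<in> carrier R \<and> s \<in> T}"

lemma cls_in [simp]: "a \<in> carrier R \<Longrightarrow> s \<in> T \<Longrightarrow> cls a s \<in> Lc"
  unfolding Lc_def by blast

lemma LcE:
  assumes "X1 \<in> Lc"
  obtains a s where "a \<in> carrier R" "s \<in> T" "X1 = cls a s"
  using assms unfolding Lc_def by blast

lemma common2:
  assumes "X1 \<in> Lc" "Y1 \<in> Lc"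
  shows "\<exists>x y m. x \<in> carrier R \<and> y \<in> carrier R \<and> m \<in> T \<and> X1 = cls x m \<and> Y1 = cls y m"
proof -
  obtain a s where a: "a \<in> carrier R" and s: "s \<in> T" and X: "X1 = cls a s" using assms(1) by (rule LcE)
  obtain b t where b: "b \<in> carrier R" and t: "t \<in> T" and Y: "Y1 = cls b t" using assms(2) by (rule LcE)
  obtain c d where c: "c \<in> carrier R" and d: "d \<in> carrier R" and cd: "s \<otimes> c = t \<otimes> d"
    and m: "s \<otimes> c \<in> T" using common[OF s t] by blast
  have "X1 = cls (a \<otimes> c) (s \<otimes> c)" using cls_expand[OF a s c m] X by simp
  moreover have "Y1 = cls (b \<otimes> d) (s \<otimes> c)" using cls_expand[OF b t d] cd m Y by simp
  ultimately show ?thesis using a b c d m by blast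
qed

lemma common3:
  assumes "X1 \<in> Lc" "Y1 \<in> Lc" "Z1 \<in> Lc"
  shows "\<exists>x y z m. x \<in> carrier R \<and> y \<in> carrier R \<and> z \<in> carrier R \<and> m \<in> T \<and>
     X1 = cls x m \<and> Y1 = cls y m \<and> Z1 = cls z m"
proof -
  obtain x y m where x: "x \<in> carrier R" and y: "y \<in> carrier R" and m: "m \<in> T"
    and X: "X1 = cls x m" and Y: "Y1 = cls y m" using common2[OF assms(1,2)] by blast
  obtain e p where e: "e \<in> carrier R" and p: "p \<in> T" and Z: "Z1 = cls e p" using assms(3) by (rule LcE)
  obtain c d where c: "c \<in> carrier R" and d: "d \<in> carrier R" and cd: "m \<otimes> c = p \<otimes> d"
    and mc: "m \<otimes> c \<in> T" using common[OF m p] by blast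
  have "X1 = cls (x \<otimes> c) (m \<otimes> c)" using cls_expand[OF x m c mc] X by simp
  moreover have "Y1 = cls (y \<otimes> c) (m \<otimes> c)" using cls_expand[OF y m c mc] Y by simp
  moreover have "Z1 = cls (e \<otimes> d) (m \<otimes> c)" using cls_expand[OF e p d] cd mc Z by simp
  moreover have "x \<otimes> c \<in> carrier R" "y \<otimes> c \<in> carrier R" "e \<otimes> d \<in> carrier R"
    using x y e c d by auto
  ultimately show ?thesis using mc by blast
qed

definition addL :: "('a \<times> 'a) set \<Rightarrow> ('a \<times> 'a) set \<Rightarrow> ('a \<times> 'a) set" where
  "addL X1 Y1 = (SOME Z1. \<exists>x y m. x \<in> carrier R \<and> y \<in> carrier R \<and> m \<in> T \<and>
      X1 = cls x m \<and> Y1 = cls y m \<and> Z1 = cls (x \<oplus> y) m)"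

lemma add_wd:
  assumes x: "x \<in> carrier R" and y: "y \<in> carrier R" and m: "m \<in> T"
    and x': "x' \<in> carrier R" and y': "y' \<in> carrier R" and m': "m' \<in> T"
    and ex: "cls x m = cls x' m'" and ey: "cls y m = cls y' m'"
  shows "cls (x \<oplus> y) m = cls (x' \<oplus> y') m'"
proof -
  obtain c d where c: "c \<in> carrier R" and d: "d \<in> carrier R" and cd: "m \<otimes> c = m' \<otimes> d"
    and mc: "m \<otimes> c \<in> T" using common[OF m m'] by blast
  have rx: "req x m x' m'" using ex cls_eq x m x' m' by blast
  have ry: "req y m y' m'" using ey cls_eq y m y' m' by blast
  have "x \<otimes> c = x' \<otimes> d" by (rule allchar[OF rx c d cd mc])
  moreover have "y \<otimes> c = y' \<otimes> d" by (rule allchar[OF ry c d cd mc])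
  ultimately have "(x \<oplus> y) \<otimes> c = (x' \<oplus> y') \<otimes> d" using x y x' y' c d by (simp add: l_distr)
  then show ?thesis
    by (intro cls_eqI) (unfold req_def, use x y x' y' m m' c d cd mc in blast)
qed

lemma add_cls:
  assumes x: "x \<in> carrier R" and y: "y \<in> carrier R" and m: "m \<in> T"
  shows "addL (cls x m) (cls y m) = cls (x \<oplus> y) m"
  unfolding addL_def
proof (rule someI2)
  show "\<exists>x' y' m'. x' \<in> carrier R \<and> y' \<in> carrier R \<and> m' \<in> T \<and> cls x m = cls x' m' \<and>
      cls y m = cls y' m' \<and> cls (x \<oplus> y) m = cls (x' \<oplus> y') m'"
    using assms by blast
next
  fix Z1 assume "\<exists>x' y' m'. x' \<in> carrier R \<and> y' \<in> carrier R \<and> m' \<in> T \<and> cls x m = cls x' m' \<and>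
      cls y m = cls y' m' \<and> Z1 = cls (x' \<oplus> y') m'"
  then obtain x' y' m' where "x' \<in> carrier R" "y' \<in> carrier R" "m' \<in> T" "cls x m = cls x' m'"
      "cls y m = cls y' m'" "Z1 = cls (x' \<oplus> y') m'" by blast
  then show "Z1 = cls (x \<oplus> y) m" using add_wd[OF x y m] by metis
qed

lemma addL_closed:
  assumes "X1 \<in> Lc" "Y1 \<in> Lc"
  shows "addL X1 Y1 \<in> Lc"
proof -
  obtain x y m where "x \<in> carrier R" "y \<in> carrier R" "m \<in> T" "X1 = cls x m" "Y1 = cls y m"
    using common2[OF assms] by blast
  then show ?thesis using add_cls by simp
qed

end

context ore_reg
begin

definition valid :: "'a \<Rightarrow> 'a \<Rightarrow> 'a \<Rightarrow> 'a \<Rightarrow> bool" where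
  "valid c u s b \<longleftrightarrow> c \<in> carrier R \<and> u \<in> T \<and> b \<otimes> u = s \<otimes> c"

lemma valid_exists: "s \<in> T \<Longrightarrow> b \<in> carrier R \<Longrightarrow> \<exists>c u. valid c u s b"
  using ore unfolding valid_def by blast

lemma mul_step1:
  assumes a: "a \<in> carrier R" and s: "s \<in> T" and b: "b \<in> carrier R" and t: "t \<in> T"
    and v1: "valid c u s b" and v2: "valid c' u' s b"
  shows "cls (a \<otimes> c) (t \<otimes> u) = cls (a \<otimes> c') (t \<otimes> u')"
proof -
  have c: "c \<in> carrier R" and u: "u \<in> T" and e1: "b \<otimes> u = s \<otimes> c" using v1 unfolding valid_def by auto
  have c': "c' \<in> carrier R" and u': "u' \<in> T" and e2: "b \<otimes> u' = s \<otimes> c'" using v2 unfolding valid_def by auto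
  obtain v v' where v: "v \<in> carrier R" and v': "v' \<in> carrier R" and vv: "u \<otimes> v = u' \<otimes> v'"
    and uv: "u \<otimes> v \<in> T" using common[OF u u'] by blast
  have cv: "c \<otimes> v = c' \<otimes> v'"
  proof (rule lcancel[OF s])
    have "s \<otimes> (c \<otimes> v) = (b \<otimes> u) \<otimes> v" using s c v e1 by (simp add: m_assoc)
    also have "\<dots> = b \<otimes> (u' \<otimes> v')" using b u v vv by (simp add: m_assoc)
    also have "\<dots> = s \<otimes> (c' \<otimes> v')" using b u' v' e2 s c' by (simp add: m_assoc[symmetric])
    finally show "s \<otimes> (c \<otimes> v) = s \<otimes> (c' \<otimes> v')" .
  qed (use c v c' v' in auto)
  show ?thesis
  proof (rule cls_eqI, unfold req_def, intro conjI bexI)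
    show "(t \<otimes> u) \<otimes> v = (t \<otimes> u') \<otimes> v'" using t u u' v v' vv by (simp add: m_assoc)
    show "(t \<otimes> u) \<otimes> v \<in> T" using mult_T[OF t uv] t u v by (simp add: m_assoc)
    show "(a \<otimes> c) \<otimes> v = (a \<otimes> c') \<otimes> v'" using a c c' v v' cv by (simp add: m_assoc)
  qed (use a c c' t u u' v v' mult_T in auto)
qed

lemma mul_kstep:
  assumes a: "a \<in> carrier R" and s: "s \<in> T" and b: "b \<in> carrier R" and t: "t \<in> T"
    and vl: "valid c u s b"
    and e: "e \<in> carrier R" and se: "s \<otimes> e \<in> T" and f: "f \<in> carrier R" and tf: "t \<otimes> f \<in> T"
  shows "\<exists>c1 u1. valid c1 u1 (s \<otimes> e) (b \<otimes> f) \<and> cls (a \<otimes> c) (t \<otimes> u) = cls ((a \<otimes> e) \<otimes> c1) ((t \<otimes> f) \<otimes> u1)"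
proof -
  have c: "c \<in> carrier R" and u: "u \<in> T" and e1: "b \<otimes> u = s \<otimes> c" using vl unfolding valid_def by auto
  obtain u1 w where u1: "u1 \<in> T" and w: "w \<in> carrier R" and fw: "f \<otimes> u1 = u \<otimes> w"
    using ore[OF f u] by blast
  have tuw: "(t \<otimes> u) \<otimes> w = (t \<otimes> f) \<otimes> u1" using t u w f u1 fw by (simp add: m_assoc)
  have tuwT: "(t \<otimes> u) \<otimes> w \<in> T" using tuw mult_T[OF tf u1] by simp
  have "cls (a \<otimes> c) (t \<otimes> u) = cls ((a \<otimes> c) \<otimes> w) ((t \<otimes> u) \<otimes> w)"
    by (rule cls_expand) (use a c t u w tuwT mult_T in auto)
  also have "\<dots> = cls (a \<otimes> (c \<otimes> w)) ((t \<otimes> f) \<otimes> u1)" using a c w tuw by (simp add: m_assoc)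
  finally have eq1: "cls (a \<otimes> c) (t \<otimes> u) = cls (a \<otimes> (c \<otimes> w)) ((t \<otimes> f) \<otimes> u1)" .
  have bf: "b \<otimes> f \<in> carrier R" using b f by simp
  have "(b \<otimes> f) \<otimes> u1 = b \<otimes> (u \<otimes> w)" using b f u1 fw by (simp add: m_assoc)
  also have "\<dots> = (b \<otimes> u) \<otimes> w" using b u w by (simp add: m_assoc)
  also have "\<dots> = s \<otimes> (c \<otimes> w)" using e1 s c w by (simp add: m_assoc)
  finally have vcw: "valid (c \<otimes> w) u1 s (b \<otimes> f)"
    unfolding valid_def using c w u1 by simp
  obtain c2 u2 where vc2: "valid c2 u2 (s \<otimes> e) (b \<otimes> f)" using valid_exists[OF se bf] by blast
  have c2: "c2 \<in> carrier R" and u2: "u2 \<in> T" and e2: "(b \<otimes> f) \<otimes> u2 = (s \<otimes> e) \<otimes> c2"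
    using vc2 unfolding valid_def by auto
  have vec2: "valid (e \<otimes> c2) u2 s (b \<otimes> f)"
    unfolding valid_def using e2 s e c2 u2 by (simp add: m_assoc)
  have "cls (a \<otimes> (c \<otimes> w)) ((t \<otimes> f) \<otimes> u1) = cls (a \<otimes> (e \<otimes> c2)) ((t \<otimes> f) \<otimes> u2)"
    using mul_step1[OF a s bf tf vcw vec2] t f by simp
  also have "\<dots> = cls ((a \<otimes> e) \<otimes> c2) ((t \<otimes> f) \<otimes> u2)" using a e c2 by (simp add: m_assoc)
  finally show ?thesis using eq1 vc2 by blast
qed

lemma mul_wd:
  assumes a: "a \<in> carrier R" and s: "s \<in> T" and b: "b \<in> carrier R" and t: "t \<in> T"
    and aa: "aa \<in> carrier R" and s': "s' \<in> T" and b': "b' \<in> carrier R" and t': "t' \<in> T"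
    and v1: "valid c u s b" and v2: "valid c' u' s' b'"
    and ea: "cls a s = cls aa s'" and eb: "cls b t = cls b' t'"
  shows "cls (a \<otimes> c) (t \<otimes> u) = cls (aa \<otimes> c') (t' \<otimes> u')"
proof -
  have ra: "req a s aa s'" using ea cls_eq a s aa s' by blast
  have rb: "req b t b' t'" using eb cls_eq b t b' t' by blast
  obtain e e' where e: "e \<in> carrier R" and e': "e' \<in> carrier R" and see: "s \<otimes> e = s' \<otimes> e'"
    and seT: "s \<otimes> e \<in> T" and aee: "a \<otimes> e = aa \<otimes> e'" using ra unfolding req_def by blast
  obtain f f' where f: "f \<in> carrier R" and f': "f' \<in> carrier R" and tff: "t \<otimes> f = t' \<otimes> f'"
    and tfT: "t \<otimes> f \<in> T" and bff: "b \<otimes> f = b' \<otimes> f'" using rb unfolding req_def by blast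
  obtain c1 u1 where vc1: "valid c1 u1 (s \<otimes> e) (b \<otimes> f)"
    and q1: "cls (a \<otimes> c) (t \<otimes> u) = cls ((a \<otimes> e) \<otimes> c1) ((t \<otimes> f) \<otimes> u1)"
    using mul_kstep[OF a s b t v1 e seT f tfT] by blast
  obtain c1' u1' where vc1': "valid c1' u1' (s' \<otimes> e') (b' \<otimes> f')"
    and q2: "cls (aa \<otimes> c') (t' \<otimes> u') = cls ((aa \<otimes> e') \<otimes> c1') ((t' \<otimes> f') \<otimes> u1')"
  proof -
    have seT': "s' \<otimes> e' \<in> T" using see seT by simp
    have tfT': "t' \<otimes> f' \<in> T" using tff tfT by simp
    show ?thesis using mul_kstep[OF aa s' b' t' v2 e' seT' f' tfT'] that by blast
  qed
  have "cls ((a \<otimes> e) \<otimes> c1) ((t \<otimes> f) \<otimes> u1) = cls ((a \<otimes> e) \<otimes> c1') ((t \<otimes> f) \<otimes> u1')"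
    by (rule mul_step1) (use a e seT b f tfT vc1 vc1' see bff b' f' in auto)
  then show ?thesis using q1 q2 aee tff by simp
qed

definition mulL :: "('a \<times> 'a) set \<Rightarrow> ('a \<times> 'a) set \<Rightarrow> ('a \<times> 'a) set" where
  "mulL X1 Y1 = (SOME Z1. \<exists>a s b t c u. a \<in> carrier R \<and> s \<in> T \<and> b \<in> carrier R \<and> t \<in> T \<and>
      valid c u s b \<and> X1 = cls a s \<and> Y1 = cls b t \<and> Z1 = cls (a \<otimes> c) (t \<otimes> u))"

lemma mul_cls:
  assumes a: "a \<in> carrier R" and s: "s \<in> T" and b: "b \<in> carrier R" and t: "t \<in> T"
    and v: "valid c u s b"
  shows "mulL (cls a s) (cls b t) = cls (a \<otimes> c) (t \<otimes> u)"
  unfolding mulL_def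
proof (rule someI2)
  show "\<exists>aa s' b' t' c' u'. aa \<in> carrier R \<and> s' \<in> T \<and> b' \<in> carrier R \<and> t' \<in> T \<and>
      valid c' u' s' b' \<and> cls a s = cls aa s' \<and> cls b t = cls b' t' \<and> cls (a \<otimes> c) (t \<otimes> u) = cls (aa \<otimes> c') (t' \<otimes> u')"
    using assms by blast
next
  fix Z1 assume "\<exists>aa s' b' t' c' u'. aa \<in> carrier R \<and> s' \<in> T \<and> b' \<in> carrier R \<and> t' \<in> T \<and>
      valid c' u' s' b' \<and> cls a s = cls aa s' \<and> cls b t = cls b' t' \<and> Z1 = cls (aa \<otimes> c') (t' \<otimes> u')"
  then obtain aa s' b' t' c' u' where "aa \<in> carrier R" "s' \<in> T" "b' \<in> carrier R" "t' \<in> T"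
      "valid c' u' s' b'" "cls a s = cls aa s'" "cls b t = cls b' t'" "Z1 = cls (aa \<otimes> c') (t' \<otimes> u')"
    by blast
  then show "Z1 = cls (a \<otimes> c) (t \<otimes> u)" using mul_wd[OF a s b t] v by metis
qed

lemma mulL_closed:
  assumes "X1 \<in> Lc" "Y1 \<in> Lc"
  shows "mulL X1 Y1 \<in> Lc"
proof -
  obtain a s where a: "a \<in> carrier R" and s: "s \<in> T" and X: "X1 = cls a s" using assms(1) by (rule LcE)
  obtain b t where b: "b \<in> carrier R" and t: "t \<in> T" and Y: "Y1 = cls b t" using assms(2) by (rule LcE)
  obtain c u where v: "valid c u s b" using valid_exists[OF s b] by blast
  then show ?thesis using mul_cls[OF a s b t v] X Y a t mult_T unfolding valid_def by auto
qed

definition Lring :: "('a \<times> 'a) set ring" where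
  "Lring = \<lparr>carrier = Lc, monoid.mult = mulL, one = cls \<one> \<one>, ring.zero = cls \<zero> \<one>, ring.add = addL\<rparr>"

lemma two_ore:
  assumes x: "x \<in> carrier R" and y: "y \<in> carrier R" and p: "p \<in> T"
  shows "\<exists>u\<in>T. \<exists>c1\<in>carrier R. \<exists>c2\<in>carrier R. x \<otimes> u = p \<otimes> c1 \<and> y \<otimes> u = p \<otimes> c2"
proof -
  obtain u1 c1 where u1: "u1 \<in> T" and c1: "c1 \<in> carrier R" and e1: "x \<otimes> u1 = p \<otimes> c1"
    using ore[OF x p] by blast
  obtain u2 c2 where u2: "u2 \<in> T" and c2: "c2 \<in> carrier R" and e2: "(y \<otimes> u1) \<otimes> u2 = p \<otimes> c2"
    using ore[OF _ p, of "y \<otimes> u1"] y u1 by auto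
  have "x \<otimes> (u1 \<otimes> u2) = p \<otimes> (c1 \<otimes> u2)" using e1 x u1 u2 p c1 by (simp add: m_assoc[symmetric])
  moreover have "y \<otimes> (u1 \<otimes> u2) = p \<otimes> c2" using e2 y u1 u2 by (simp add: m_assoc)
  ultimately show ?thesis using mult_T[OF u1 u2] c1 c2 u2 by (meson m_closed Tc)
qed

lemma Lring_ring: "ring Lring"
proof (rule ringI)
  show "abelian_group Lring"
  proof (rule abelian_groupI, unfold Lring_def ring_record_simps)
    fix X1 Y1 Z1 assume X: "X1 \<in> Lc" and Y: "Y1 \<in> Lc" and Z: "Z1 \<in> Lc"
    show "addL X1 Y1 \<in> Lc" by (rule addL_closed[OF X Y])
    show "addL (addL X1 Y1) Z1 = addL X1 (addL Y1 Z1)"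
    proof -
      obtain x y z m where "x \<in> carrier R" "y \<in> carrier R" "z \<in> carrier R" "m \<in> T"
        "X1 = cls x m" "Y1 = cls y m" "Z1 = cls z m" using common3[OF X Y Z] by blast
      then show ?thesis by (simp add: add_cls a_assoc)
    qed
    show "addL X1 Y1 = addL Y1 X1"
    proof -
      obtain x y m where "x \<in> carrier R" "y \<in> carrier R" "m \<in> T"
        "X1 = cls x m" "Y1 = cls y m" using common2[OF X Y] by blast
      then show ?thesis by (simp add: add_cls a_comm)
    qed
  next
    show "cls \<zero> \<one> \<in> Lc" using one_T by simp
  next
    fix X1 assume X: "X1 \<in> Lc"
    obtain x m where x: "x \<in> carrier R" and m: "m \<in> T" and Xe: "X1 = cls x m" using X by (rule LcE)
    have z: "cls \<zero> \<one> = cls \<zero> m" using cls_expand[of \<zero> \<one> m] one_T m by simp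
    show "addL (cls \<zero> \<one>) X1 = X1" using x m by (simp add: Xe z add_cls)
    show "\<exists>y\<in>Lc. addL y X1 = cls \<zero> \<one>"
      using x m by (intro bexI[of _ "cls (\<ominus> x) m"]) (simp_all add: Xe z add_cls l_neg)
  qed
next
  show "monoid Lring"
  proof (rule monoidI, unfold Lring_def ring_record_simps)
    fix X1 Y1 Z1 assume X: "X1 \<in> Lc" and Y: "Y1 \<in> Lc" and Z: "Z1 \<in> Lc"
    show "mulL X1 Y1 \<in> Lc" by (rule mulL_closed[OF X Y])
    obtain a s where a: "a \<in> carrier R" and s: "s \<in> T" and Xe: "X1 = cls a s" using X by (rule LcE)
    obtain b t where b: "b \<in> carrier R" and t: "t \<in> T" and Ye: "Y1 = cls b t" using Y by (rule LcE)
    obtain e p where e: "e \<in> carrier R" and p: "p \<in> T" and Ze: "Z1 = cls e p" using Z by (rule LcE)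
    obtain c u where c: "c \<in> carrier R" and u: "u \<in> T" and bu: "b \<otimes> u = s \<otimes> c"
      using ore[OF b s] by blast
    have tu: "t \<otimes> u \<in> T" using mult_T t u by simp
    obtain d v where d: "d \<in> carrier R" and v: "v \<in> T" and ev: "e \<otimes> v = (t \<otimes> u) \<otimes> d"
      using ore[OF e tu] by blast
    have XY: "mulL X1 Y1 = cls (a \<otimes> c) (t \<otimes> u)"
      unfolding Xe Ye by (rule mul_cls[OF a s b t]) (simp add: valid_def c u bu)
    have XYZ: "mulL (mulL X1 Y1) Z1 = cls ((a \<otimes> c) \<otimes> d) (p \<otimes> v)"
      unfolding XY Ze by (rule mul_cls) (use a c tu e p d v ev in \<open>auto simp: valid_def\<close>)
    have YZ: "mulL Y1 Z1 = cls (b \<otimes> (u \<otimes> d)) (p \<otimes> v)"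
      unfolding Ye Ze by (rule mul_cls) (use b t e p d v ev u in \<open>auto simp: valid_def m_assoc\<close>)
    have XYZ2: "mulL X1 (mulL Y1 Z1) = cls (a \<otimes> (c \<otimes> d)) ((p \<otimes> v) \<otimes> \<one>)"
      unfolding YZ Xe
    proof (rule mul_cls)
      show "valid (c \<otimes> d) \<one> s (b \<otimes> (u \<otimes> d))"
        unfolding valid_def using b u d s c bu one_T by (simp add: m_assoc[symmetric])
    qed (use a s b u d p v mult_T in auto)
    show "mulL (mulL X1 Y1) Z1 = mulL X1 (mulL Y1 Z1)"
      using XYZ XYZ2 a c d p v by (simp add: m_assoc)
  next
    show "cls \<one> \<one> \<in> Lc" using one_T by simp
  next
    fix X1 assume X: "X1 \<in> Lc"
    obtain a s where a: "a \<in> carrier R" and s: "s \<in> T" and Xe: "X1 = cls a s" using X by (rule LcE)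
    have "mulL (cls \<one> \<one>) (cls a s) = cls (\<one> \<otimes> a) (s \<otimes> \<one>)"
      by (rule mul_cls) (use a s one_T in \<open>auto simp: valid_def\<close>)
    then show "mulL (cls \<one> \<one>) X1 = X1" using a s by (simp add: Xe)
    have "mulL (cls a s) (cls \<one> \<one>) = cls (a \<otimes> \<one>) (\<one> \<otimes> s)"
      by (rule mul_cls) (use a s one_T in \<open>auto simp: valid_def\<close>)
    then show "mulL X1 (cls \<one> \<one>) = X1" using a s by (simp add: Xe)
  qed
next
  fix X1 Y1 Z1 assume X: "X1 \<in> carrier Lring" and Y: "Y1 \<in> carrier Lring" and Z: "Z1 \<in> carrier Lring"
  then have X: "X1 \<in> Lc" and Y: "Y1 \<in> Lc" and Z: "Z1 \<in> Lc" by (simp_all add: Lring_def)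
  obtain x y m where x: "x \<in> carrier R" and y: "y \<in> carrier R" and m: "m \<in> T"
    and Xe: "X1 = cls x m" and Ye: "Y1 = cls y m" using common2[OF X Y] by blast
  obtain e p where e: "e \<in> carrier R" and p: "p \<in> T" and Ze: "Z1 = cls e p" using Z by (rule LcE)
  show "(X1 \<oplus>\<^bsub>Lring\<^esub> Y1) \<otimes>\<^bsub>Lring\<^esub> Z1 = X1 \<otimes>\<^bsub>Lring\<^esub> Z1 \<oplus>\<^bsub>Lring\<^esub> Y1 \<otimes>\<^bsub>Lring\<^esub> Z1"
  proof -
    obtain c u where c: "c \<in> carrier R" and u: "u \<in> T" and eu: "e \<otimes> u = m \<otimes> c"
      using ore[OF e m] by blast
    have vl: "valid c u m e" by (simp add: valid_def c u eu)
    have "mulL (addL X1 Y1) Z1 = cls ((x \<oplus> y) \<otimes> c) (p \<otimes> u)"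
      unfolding Xe Ye Ze using x y m by (simp add: add_cls mul_cls[OF _ m e p vl])
    also have "\<dots> = addL (cls (x \<otimes> c) (p \<otimes> u)) (cls (y \<otimes> c) (p \<otimes> u))"
      using x y c p u mult_T by (simp add: add_cls l_distr)
    also have "\<dots> = addL (mulL X1 Z1) (mulL Y1 Z1)"
      unfolding Xe Ye Ze using x y by (simp add: mul_cls[OF _ m e p vl])
    finally show ?thesis by (simp add: Lring_def)
  qed
  show "Z1 \<otimes>\<^bsub>Lring\<^esub> (X1 \<oplus>\<^bsub>Lring\<^esub> Y1) = Z1 \<otimes>\<^bsub>Lring\<^esub> X1 \<oplus>\<^bsub>Lring\<^esub> Z1 \<otimes>\<^bsub>Lring\<^esub> Y1"
  proof -
    obtain u c1 c2 where u: "u \<in> T" and c1: "c1 \<in> carrier R" and c2: "c2 \<in> carrier R"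
      and e1: "x \<otimes> u = p \<otimes> c1" and e2: "y \<otimes> u = p \<otimes> c2" using two_ore[OF x y p] by blast
    have v1: "valid c1 u p x" by (simp add: valid_def c1 u e1)
    have v2: "valid c2 u p y" by (simp add: valid_def c2 u e2)
    have v3: "valid (c1 \<oplus> c2) u p (x \<oplus> y)"
      using x y u p c1 c2 e1 e2 by (simp add: valid_def l_distr r_distr)
    have "mulL Z1 (addL X1 Y1) = cls (e \<otimes> (c1 \<oplus> c2)) (m \<otimes> u)"
      unfolding Xe Ye Ze using x y m by (simp add: add_cls mul_cls[OF e p _ m v3])
    also have "\<dots> = addL (cls (e \<otimes> c1) (m \<otimes> u)) (cls (e \<otimes> c2) (m \<otimes> u))"
      using e c1 c2 m u mult_T by (simp add: add_cls r_distr)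
    also have "\<dots> = addL (mulL Z1 X1) (mulL Z1 Y1)"
      unfolding Xe Ye Ze using x y by (simp add: mul_cls[OF e p _ m v1] mul_cls[OF e p _ m v2])
    finally show ?thesis by (simp add: Lring_def)
  qed
qed

definition gL :: "'a \<Rightarrow> ('a \<times> 'a) set" where
  "gL a = cls a \<one>"

lemma gL_hom: "gL \<in> ring_hom R Lring"
proof (rule ring_hom_memI, unfold Lring_def ring_record_simps gL_def)
  fix x y assume x: "x \<in> carrier R" and y: "y \<in> carrier R"
  show "cls x \<one> \<in> Lc" using x one_T by simp
  show "cls (x \<otimes> y) \<one> = mulL (cls x \<one>) (cls y \<one>)"
    using mul_cls[OF x one_T y one_T, of y \<one>] x y one_T by (simp add: valid_def)
  show "cls (x \<oplus> y) \<one> = addL (cls x \<one>) (cls y \<one>)"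
    using add_cls[OF x y one_T] by simp
qed simp

lemma gL_units: "t \<in> T \<Longrightarrow> gL t \<in> Units Lring"
proof -
  assume t: "t \<in> T"
  have tc: "t \<in> carrier R" using t by simp
  have i1: "mulL (cls t \<one>) (cls \<one> t) = cls \<one> \<one>"
  proof -
    have "mulL (cls t \<one>) (cls \<one> t) = cls (t \<otimes> \<one>) (t \<otimes> \<one>)"
      by (rule mul_cls) (use t one_T in \<open>auto simp: valid_def\<close>)
    also have "\<dots> = cls \<one> \<one>"
      by (rule cls_eqI) (unfold req_def, use t one_T mult_T[OF t t] in \<open>auto intro!: bexI[of _ \<one>] bexI[of _ t]\<close>)
    finally show ?thesis .
  qed
  have i2: "mulL (cls \<one> t) (cls t \<one>) = cls \<one> \<one>"
  proof -
    have "mulL (cls \<one> t) (cls t \<one>) = cls (\<one> \<otimes> \<one>) (\<one> \<otimes> \<one>)"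
      by (rule mul_cls) (use t one_T in \<open>auto simp: valid_def\<close>)
    then show ?thesis by simp
  qed
  show ?thesis unfolding Units_def Lring_def gL_def
    using i1 i2 t one_T by auto
qed

lemma gL_inj: "x \<in> carrier R \<Longrightarrow> gL x = \<zero>\<^bsub>Lring\<^esub> \<Longrightarrow> x = \<zero>"
proof -
  assume x: "x \<in> carrier R" and "gL x = \<zero>\<^bsub>Lring\<^esub>"
  then have "cls x \<one> = cls \<zero> \<one>" by (simp add: gL_def Lring_def)
  then have "req x \<one> \<zero> \<one>" using cls_eq x one_T by blast
  then have "x \<otimes> \<one> = \<zero> \<otimes> \<one>" by (rule allchar) (use one_T in auto)
  then show "x = \<zero>" using x by simp
qed

end

lemma ore_reg_model:
  fixes B :: "('b, 'm) ring_scheme"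
  assumes "ore_reg B T"
  shows "\<exists>L :: ('b \<times> 'b) set ring. ring L \<and> (\<exists>g. g \<in> ring_hom B L \<and> (\<forall>t\<in>T. g t \<in> Units L)
     \<and> (\<forall>x\<in>carrier B. g x = \<zero>\<^bsub>L\<^esub> \<longrightarrow> x = \<zero>\<^bsub>B\<^esub>))"
proof -
  interpret ore_reg B T by (rule assms)
  show ?thesis using Lring_ring gL_hom gL_units gL_inj by blast
qed

lemma left_reg_model:
  fixes A :: "('c, 'm) ring_scheme"
  assumes A: "ring A" and T_sub: "T \<subseteq> carrier A" and one_T: "\<one>\<^bsub>A\<^esub> \<in> T"
    and mult_T: "\<And>s t. s \<in> T \<Longrightarrow> t \<in> T \<Longrightarrow> s \<otimes>\<^bsub>A\<^esub> t \<in> T"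
    and ore: "\<And>r s. r \<in> carrier A \<Longrightarrow> s \<in> T \<Longrightarrow> \<exists>t\<in>T. \<exists>r'\<in>carrier A. r \<otimes>\<^bsub>A\<^esub> t = s \<otimes>\<^bsub>A\<^esub> r'"
    and lreg: "\<And>s x. s \<in> T \<Longrightarrow> x \<in> carrier A \<Longrightarrow> s \<otimes>\<^bsub>A\<^esub> x = \<zero>\<^bsub>A\<^esub> \<Longrightarrow> x = \<zero>\<^bsub>A\<^esub>"
  shows "\<exists>L :: ('c set \<times> 'c set) set ring. ring L \<and> (\<exists>g. g \<in> ring_hom A L \<and> (\<forall>t\<in>T. g t \<in> Units L)
     \<and> (\<forall>x\<in>carrier A. g x = \<zero>\<^bsub>L\<^esub> \<longrightarrow> (\<exists>t\<in>T. x \<otimes>\<^bsub>A\<^esub> t = \<zero>\<^bsub>A\<^esub>)))"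
proof -
  interpret A: ring A by (rule A)
  have Tc: "t \<in> T \<Longrightarrow> t \<in> carrier A" for t using T_sub by blast
  define N where "N = {a \<in> carrier A. \<exists>t\<in>T. a \<otimes>\<^bsub>A\<^esub> t = \<zero>\<^bsub>A\<^esub>}"
  have N_ideal: "ideal N A"
  proof (rule idealI[OF A])
    show "subgroup N (add_monoid A)"
    proof (rule A.add.subgroupI)
      show "N \<subseteq> carrier A" by (auto simp: N_def)
      have "\<zero>\<^bsub>A\<^esub> \<in> N" using one_T by (auto simp: N_def intro!: bexI[of _ "\<one>\<^bsub>A\<^esub>"])
      then show "N \<noteq> {}" by blast
    next
      fix a assume "a \<in> N"
      then obtain t where a: "a \<in> carrier A" and t: "t \<in> T" and at: "a \<otimes>\<^bsub>A\<^esub> t = \<zero>\<^bsub>A\<^esub>"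
        by (auto simp: N_def)
      have "(\<ominus>\<^bsub>A\<^esub> a) \<otimes>\<^bsub>A\<^esub> t = \<zero>\<^bsub>A\<^esub>" using a Tc[OF t] at by (simp add: A.l_minus)
      then show "\<ominus>\<^bsub>A\<^esub> a \<in> N" using a t by (auto simp: N_def)
    next
      fix a b assume "a \<in> N" "b \<in> N"
      then obtain t1 t2 where a: "a \<in> carrier A" and t1: "t1 \<in> T" and at: "a \<otimes>\<^bsub>A\<^esub> t1 = \<zero>\<^bsub>A\<^esub>"
        and b: "b \<in> carrier A" and t2: "t2 \<in> T" and bt: "b \<otimes>\<^bsub>A\<^esub> t2 = \<zero>\<^bsub>A\<^esub>"
        by (auto simp: N_def)
      obtain u r' where u: "u \<in> T" and r': "r' \<in> carrier A" and e: "t1 \<otimes>\<^bsub>A\<^esub> u = t2 \<otimes>\<^bsub>A\<^esub> r'"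
        using ore[OF Tc[OF t1] t2] by blast
      have "(a \<oplus>\<^bsub>A\<^esub> b) \<otimes>\<^bsub>A\<^esub> (t1 \<otimes>\<^bsub>A\<^esub> u) = (a \<otimes>\<^bsub>A\<^esub> t1) \<otimes>\<^bsub>A\<^esub> u \<oplus>\<^bsub>A\<^esub> (b \<otimes>\<^bsub>A\<^esub> t2) \<otimes>\<^bsub>A\<^esub> r'"
        using a b Tc[OF t1] Tc[OF t2] Tc[OF u] r' e by (simp add: A.l_distr A.m_assoc)
      also have "\<dots> = \<zero>\<^bsub>A\<^esub>" using at bt Tc[OF u] r' by simp
      finally show "a \<oplus>\<^bsub>A\<^esub> b \<in> N"
        using a b mult_T[OF t1 u] by (auto simp: N_def)
    qed
  next
    fix a x assume "a \<in> N" and x: "x \<in> carrier A"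
    then obtain t where a: "a \<in> carrier A" and t: "t \<in> T" and at: "a \<otimes>\<^bsub>A\<^esub> t = \<zero>\<^bsub>A\<^esub>"
      by (auto simp: N_def)
    have "(x \<otimes>\<^bsub>A\<^esub> a) \<otimes>\<^bsub>A\<^esub> t = \<zero>\<^bsub>A\<^esub>" using x a Tc[OF t] at by (simp add: A.m_assoc)
    then show "x \<otimes>\<^bsub>A\<^esub> a \<in> N" using x a t by (auto simp: N_def)
    obtain u r' where u: "u \<in> T" and r': "r' \<in> carrier A" and e: "x \<otimes>\<^bsub>A\<^esub> u = t \<otimes>\<^bsub>A\<^esub> r'"
      using ore[OF x t] by blast
    have "(a \<otimes>\<^bsub>A\<^esub> x) \<otimes>\<^bsub>A\<^esub> u = (a \<otimes>\<^bsub>A\<^esub> t) \<otimes>\<^bsub>A\<^esub> r'"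
      using x a Tc[OF t] Tc[OF u] r' e by (simp add: A.m_assoc)
    also have "\<dots> = \<zero>\<^bsub>A\<^esub>" using at r' by simp
    finally show "a \<otimes>\<^bsub>A\<^esub> x \<in> N" using x a u by (auto simp: N_def)
  qed
  interpret N: ideal N A by (rule N_ideal)
  define B where "B = A Quot N"
  define \<pi> where "\<pi> = (\<lambda>x. N +>\<^bsub>A\<^esub> x)"
  have Bring: "ring B" unfolding B_def by (rule N.quotient_is_ring)
  interpret B: ring B by (rule Bring)
  have pih: "\<pi> \<in> ring_hom A B" unfolding \<pi>_def B_def by (rule N.rcos_ring_hom)
  interpret pih: ring_hom_ring A B \<pi> by (intro ring_hom_ringI2 A Bring pih)
  have Bcar: "C1 \<in> carrier B \<Longrightarrow> \<exists>x\<in>carrier A. C1 = \<pi> x" for C1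
    by (auto simp: B_def \<pi>_def quot_carrier A_RCOSETS_def')
  have pi0: "x \<in> carrier A \<Longrightarrow> (\<pi> x = \<zero>\<^bsub>B\<^esub>) \<longleftrightarrow> x \<in> N" for x
    using ideal_coset_eq_zero[OF A N_ideal] by (simp add: B_def \<pi>_def quot_zero)
  have oreB: "ore_reg B (\<pi> ` T)"
  proof (unfold_locales)
    show "\<pi> ` T \<subseteq> carrier B" using Tc by auto
    show "\<one>\<^bsub>B\<^esub> \<in> \<pi> ` T" using one_T pih.hom_one by force
  next
    fix s t assume "s \<in> \<pi> ` T" "t \<in> \<pi> ` T"
    then obtain s0 t0 where "s0 \<in> T" "t0 \<in> T" "s = \<pi> s0" "t = \<pi> t0" by blast
    then show "s \<otimes>\<^bsub>B\<^esub> t \<in> \<pi> ` T" using mult_T Tc pih.hom_mult by (metis image_eqI)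
  next
    fix r s assume "r \<in> carrier B" "s \<in> \<pi> ` T"
    then obtain r0 s0 where r0: "r0 \<in> carrier A" and s0: "s0 \<in> T" and rs: "r = \<pi> r0" "s = \<pi> s0"
      using Bcar by blast
    obtain t r' where t: "t \<in> T" and r': "r' \<in> carrier A" and e: "r0 \<otimes>\<^bsub>A\<^esub> t = s0 \<otimes>\<^bsub>A\<^esub> r'"
      using ore[OF r0 s0] by blast
    have "r \<otimes>\<^bsub>B\<^esub> \<pi> t = s \<otimes>\<^bsub>B\<^esub> \<pi> r'" using rs e r0 t s0 r' Tc by (simp flip: pih.hom_mult)
    moreover have "\<pi> t \<in> \<pi> ` T" using t by blast
    moreover have "\<pi> r' \<in> carrier B" using r' by simp
    ultimately show "\<exists>t\<in>\<pi> ` T. \<exists>r'\<in>carrier B. r \<otimes>\<^bsub>B\<^esub> t = s \<otimes>\<^bsub>B\<^esub> r'" by blast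
  next
    fix s x assume "s \<in> \<pi> ` T" "x \<in> carrier B" and z: "s \<otimes>\<^bsub>B\<^esub> x = \<zero>\<^bsub>B\<^esub>"
    then obtain s0 x0 where s0: "s0 \<in> T" and x0: "x0 \<in> carrier A" and sx: "s = \<pi> s0" "x = \<pi> x0"
      using Bcar by blast
    have "\<pi> (s0 \<otimes>\<^bsub>A\<^esub> x0) = \<zero>\<^bsub>B\<^esub>" using z sx s0 x0 Tc by simp
    then have "s0 \<otimes>\<^bsub>A\<^esub> x0 \<in> N" using pi0[of "s0 \<otimes>\<^bsub>A\<^esub> x0"] s0 x0 Tc by simp
    then obtain u where u: "u \<in> T" and e: "(s0 \<otimes>\<^bsub>A\<^esub> x0) \<otimes>\<^bsub>A\<^esub> u = \<zero>\<^bsub>A\<^esub>" unfolding N_def by blast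
    have e': "s0 \<otimes>\<^bsub>A\<^esub> (x0 \<otimes>\<^bsub>A\<^esub> u) = \<zero>\<^bsub>A\<^esub>"
      using e s0 x0 u Tc by (simp add: A.m_assoc)
    have "x0 \<otimes>\<^bsub>A\<^esub> u = \<zero>\<^bsub>A\<^esub>"
      by (rule lreg[OF s0 _ e']) (use x0 u Tc in simp)
    then have "x0 \<in> N" using x0 u unfolding N_def by blast
    then show "x = \<zero>\<^bsub>B\<^esub>" using pi0 x0 sx by simp
  next
    fix s x assume "s \<in> \<pi> ` T" "x \<in> carrier B" and z: "x \<otimes>\<^bsub>B\<^esub> s = \<zero>\<^bsub>B\<^esub>"
    then obtain s0 x0 where s0: "s0 \<in> T" and x0: "x0 \<in> carrier A" and sx: "s = \<pi> s0" "x = \<pi> x0"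
      using Bcar by blast
    have "\<pi> (x0 \<otimes>\<^bsub>A\<^esub> s0) = \<zero>\<^bsub>B\<^esub>" using z sx s0 x0 Tc by simp
    then have "x0 \<otimes>\<^bsub>A\<^esub> s0 \<in> N" using pi0[of "x0 \<otimes>\<^bsub>A\<^esub> s0"] s0 x0 Tc by simp
    then obtain u where u: "u \<in> T" and e: "(x0 \<otimes>\<^bsub>A\<^esub> s0) \<otimes>\<^bsub>A\<^esub> u = \<zero>\<^bsub>A\<^esub>" unfolding N_def by blast
    have "x0 \<otimes>\<^bsub>A\<^esub> (s0 \<otimes>\<^bsub>A\<^esub> u) = \<zero>\<^bsub>A\<^esub>" using e s0 x0 u Tc by (simp add: A.m_assoc)
    then have "x0 \<in> N" using x0 mult_T[OF s0 u] unfolding N_def by blast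
    then show "x = \<zero>\<^bsub>B\<^esub>" using pi0 x0 sx by simp
  qed
  obtain L :: "('c set \<times> 'c set) set ring" and g where L: "ring L" and g: "g \<in> ring_hom B L"
    and gu: "\<forall>t\<in>\<pi> ` T. g t \<in> Units L" and gi: "\<forall>x\<in>carrier B. g x = \<zero>\<^bsub>L\<^esub> \<longrightarrow> x = \<zero>\<^bsub>B\<^esub>"
    using ore_reg_model[OF oreB] by blast
  have comp: "g \<circ> \<pi> \<in> ring_hom A L" by (rule ring_hom_trans[OF pih g])
  have cu: "\<forall>t\<in>T. (g \<circ> \<pi>) t \<in> Units L" using gu by simp
  have ck: "\<forall>x\<in>carrier A. (g \<circ> \<pi>) x = \<zero>\<^bsub>L\<^esub> \<longrightarrow> (\<exists>t\<in>T. x \<otimes>\<^bsub>A\<^esub> t = \<zero>\<^bsub>A\<^esub>)"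
  proof (intro ballI impI)
    fix x assume x: "x \<in> carrier A" and "(g \<circ> \<pi>) x = \<zero>\<^bsub>L\<^esub>"
    then have "\<pi> x = \<zero>\<^bsub>B\<^esub>" using gi pih.hom_closed by auto
    then have "x \<in> N" using pi0 x by simp
    then show "\<exists>t\<in>T. x \<otimes>\<^bsub>A\<^esub> t = \<zero>\<^bsub>A\<^esub>" unfolding N_def by blast
  qed
  show ?thesis using L comp cu ck by blast
qed

lemma quot_elem: "C1 \<in> carrier (A Quot I) \<Longrightarrow> \<exists>x\<in>carrier A. C1 = I +>\<^bsub>A\<^esub> x"
  by (auto simp: quot_carrier A_RCOSETS_def')

lemma quot_elemI: "x \<in> carrier A \<Longrightarrow> I +>\<^bsub>A\<^esub> x \<in> carrier (A Quot I)"
  by (auto simp: quot_carrier A_RCOSETS_def')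

lemma quot_mult_cos:
  "ideal I A \<Longrightarrow> x \<in> carrier A \<Longrightarrow> y \<in> carrier A \<Longrightarrow>
   (I +>\<^bsub>A\<^esub> x) \<otimes>\<^bsub>A Quot I\<^esub> (I +>\<^bsub>A\<^esub> y) = I +>\<^bsub>A\<^esub> (x \<otimes>\<^bsub>A\<^esub> y)"
  by (simp add: quot_mult ideal.rcoset_mult_add)

lemma a'_cond_iff:
  assumes R: "ring R" and S: "S \<subseteq> carrier R"
  shows "a'_cond R S b \<longleftrightarrow> ideal b R \<and> (\<forall>s\<in>S. \<forall>x\<in>carrier R. s \<otimes>\<^bsub>R\<^esub> x \<in> b \<longrightarrow> x \<in> b)"
proof (cases "ideal b R")
  case False
  then show ?thesis by (simp add: a'_cond_def)
next
  case True
  interpret R: ring R by (rule R)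
  have key: "(b +>\<^bsub>R\<^esub> s \<in> C' (R Quot b)) \<longleftrightarrow> (\<forall>x\<in>carrier R. s \<otimes>\<^bsub>R\<^esub> x \<in> b \<longrightarrow> x \<in> b)"
    if s: "s \<in> carrier R" for s
  proof -
    have "(b +>\<^bsub>R\<^esub> s \<in> C' (R Quot b)) \<longleftrightarrow>
        (\<forall>C1\<in>carrier (R Quot b). (b +>\<^bsub>R\<^esub> s) \<otimes>\<^bsub>R Quot b\<^esub> C1 = b \<longrightarrow> C1 = b)"
      using quot_elemI[OF s] by (simp add: C'_def quot_zero)
    also have "\<dots> \<longleftrightarrow> (\<forall>x\<in>carrier R. (b +>\<^bsub>R\<^esub> s) \<otimes>\<^bsub>R Quot b\<^esub> (b +>\<^bsub>R\<^esub> x) = b \<longrightarrow> b +>\<^bsub>R\<^esub> x = b)"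
      using quot_elem[of _ R b] quot_elemI[of _ R b] by metis
    also have "\<dots> \<longleftrightarrow> (\<forall>x\<in>carrier R. s \<otimes>\<^bsub>R\<^esub> x \<in> b \<longrightarrow> x \<in> b)"
      using s True by (simp add: quot_mult_cos ideal_coset_eq_zero[OF R True])
    finally show ?thesis .
  qed
  show ?thesis using True key S by (auto simp: a'_cond_def)
qed

lemma a'_props:
  assumes R: "ring R" and S: "S \<subseteq> carrier R"
  shows "a'_cond R S (a' R S)" and "\<And>c. a'_cond R S c \<Longrightarrow> a' R S \<subseteq> c"
proof -
  interpret R: ring R by (rule R)
  define K where "K = {b. a'_cond R S b}"
  have carrK: "carrier R \<in> K"
    unfolding K_def a'_cond_iff[OF R S] by (simp add: R.oneideal)
  have condK: "a'_cond R S (\<Inter>K)"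
    unfolding a'_cond_iff[OF R S]
  proof
    show "ideal (\<Inter>K) R"
      by (rule R.i_Intersect) (use carrK in \<open>auto simp: K_def a'_cond_iff[OF R S]\<close>)
    show "\<forall>s\<in>S. \<forall>x\<in>carrier R. s \<otimes>\<^bsub>R\<^esub> x \<in> \<Inter>K \<longrightarrow> x \<in> \<Inter>K"
      by (auto simp: K_def a'_cond_iff[OF R S])
  qed
  have least: "\<And>c. a'_cond R S c \<Longrightarrow> \<Inter>K \<subseteq> c" by (auto simp: K_def)
  have eq: "a' R S = \<Inter>K"
    unfolding a'_def
  proof (rule the_equality)
    show "a'_cond R S (\<Inter>K) \<and> (\<forall>c. a'_cond R S c \<longrightarrow> \<Inter>K \<subseteq> c)" using condK least by blast
    fix b assume "a'_cond R S b \<and> (\<forall>c. a'_cond R S c \<longrightarrow> b \<subseteq> c)"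
    then show "b = \<Inter>K" using condK least by blast
  qed
  show "a'_cond R S (a' R S)" using condK eq by simp
  show "\<And>c. a'_cond R S c \<Longrightarrow> a' R S \<subseteq> c" using least eq by simp
qed

context loc_ore
begin

abbreviation A0 where "A0 \<equiv> a' R S"

lemma A0_ideal: "ideal A0 R"
  using a'_props(1)[OF ringR S_sub] a'_cond_iff[OF ringR S_sub] by blast

lemma A0_cond: "s \<in> S \<Longrightarrow> x \<in> carrier R \<Longrightarrow> s \<otimes>\<^bsub>R\<^esub> x \<in> A0 \<Longrightarrow> x \<in> A0"
  using a'_props(1)[OF ringR S_sub] a'_cond_iff[OF ringR S_sub] by blast

lemma ker_cond: "a'_cond R S (a_kernel R U lc)"
  unfolding a'_cond_iff[OF ringR S_sub]
proof
  interpret hh: ring_hom_ring R U lc by (intro ring_hom_ringI2 Rr.ring_axioms Ur.ring_axioms lc_hom)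
  show "ideal (a_kernel R U lc) R" by (rule hh.kernel_is_ideal)
  show "\<forall>s\<in>S. \<forall>x\<in>carrier R. s \<otimes>\<^bsub>R\<^esub> x \<in> a_kernel R U lc \<longrightarrow> x \<in> a_kernel R U lc"
  proof (intro ballI impI)
    fix s x assume s: "s \<in> S" and x: "x \<in> carrier R" and "s \<otimes>\<^bsub>R\<^esub> x \<in> a_kernel R U lc"
    then have z: "lc s \<otimes>\<^bsub>U\<^esub> lc x = \<zero>\<^bsub>U\<^esub>" using lc_mult sc unfolding a_kernel_def' by auto
    have "lc x = (lx s \<otimes>\<^bsub>U\<^esub> lc s) \<otimes>\<^bsub>U\<^esub> lc x" using lx_lc[OF s] lc_closed[OF x] by simp
    also have "\<dots> = lx s \<otimes>\<^bsub>U\<^esub> (lc s \<otimes>\<^bsub>U\<^esub> lc x)"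
      using lx_closed[OF s] lc_closed[OF x] lc_closed[OF sc[OF s]] by (simp add: Ur.m_assoc)
    also have "\<dots> = \<zero>\<^bsub>U\<^esub>" using z lx_closed[OF s] by simp
    finally show "x \<in> a_kernel R U lc" using x unfolding a_kernel_def' by blast
  qed
qed

lemma A0_ker: "A0 \<subseteq> ass_R R S"
  unfolding ass_R_def using a'_props(2)[OF ringR S_sub ker_cond] .

lemma ass_R_iff: "r \<in> ass_R R S \<longleftrightarrow> r \<in> carrier R \<and> lc r = \<zero>\<^bsub>U\<^esub>"
  unfolding ass_R_def a_kernel_def' by blast

lemma A0_full_iff: "A0 = carrier R \<longleftrightarrow> \<one>\<^bsub>R\<^esub> \<in> A0"
  using ideal.one_imp_carrier[OF A0_ideal] by auto

lemma S_in_A0: "s \<in> S \<Longrightarrow> s \<in> A0 \<Longrightarrow> A0 = carrier R"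
  using A0_cond[of s "\<one>\<^bsub>R\<^esub>"] sc A0_full_iff by simp

abbreviation Rq where "Rq \<equiv> R Quot A0"
abbreviation pq where "pq \<equiv> (\<lambda>r. A0 +>\<^bsub>R\<^esub> r)"
abbreviation Sq where "Sq \<equiv> pq ` S"

lemma Rq_ring: "ring Rq" by (rule ideal.quotient_is_ring[OF A0_ideal])
lemma pq_hom: "pq \<in> ring_hom R Rq" using ideal.rcos_ring_hom[OF A0_ideal] by simp

sublocale Rqr: ring Rq by (rule Rq_ring)
sublocale pqh: ring_hom_ring R Rq pq by (intro ring_hom_ringI2 Rr.ring_axioms Rq_ring pq_hom)

lemma pq_zero_iff: "x \<in> carrier R \<Longrightarrow> pq x = \<zero>\<^bsub>Rq\<^esub> \<longleftrightarrow> x \<in> A0"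
  using ideal_coset_eq_zero[OF ringR A0_ideal] by (simp add: quot_zero)

lemma Rq_elem: "C1 \<in> carrier Rq \<Longrightarrow> \<exists>x\<in>carrier R. C1 = pq x"
  by (rule quot_elem)

lemma Sq_lreg:
  assumes s: "s \<in> S" and C: "C1 \<in> carrier Rq" and z: "pq s \<otimes>\<^bsub>Rq\<^esub> C1 = \<zero>\<^bsub>Rq\<^esub>"
  shows "C1 = \<zero>\<^bsub>Rq\<^esub>"
proof -
  obtain x where x: "x \<in> carrier R" and Cx: "C1 = pq x" using Rq_elem[OF C] by blast
  have "pq (s \<otimes>\<^bsub>R\<^esub> x) = \<zero>\<^bsub>Rq\<^esub>" using z Cx x sc[OF s] by simp
  then have "s \<otimes>\<^bsub>R\<^esub> x \<in> A0" using pq_zero_iff[of "s \<otimes>\<^bsub>R\<^esub> x"] x sc[OF s] by simp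
  then have "x \<in> A0" using A0_cond s x by blast
  then show ?thesis using pq_zero_iff x Cx by simp
qed

lemma Sq_denominator:
  assumes ne: "A0 \<noteq> carrier R"
  shows "right_denominator_set Rq Sq"
proof -
  have ms: "mult_set Rq Sq"
    unfolding mult_set_def
  proof (intro conjI ballI)
    show "Sq \<subseteq> carrier Rq" using sc by auto
    show "\<one>\<^bsub>Rq\<^esub> \<in> Sq" using one_S pqh.hom_one by force
    show "\<zero>\<^bsub>Rq\<^esub> \<notin> Sq"
    proof
      assume "\<zero>\<^bsub>Rq\<^esub> \<in> Sq"
      then obtain s where s: "s \<in> S" and "pq s = \<zero>\<^bsub>Rq\<^esub>" by auto
      then have "s \<in> A0" using pq_zero_iff sc by simp
      then show False using S_in_A0 s ne by blast
    qed
    fix s t assume "s \<in> Sq" "t \<in> Sq"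
    then obtain s0 t0 where "s0 \<in> S" "t0 \<in> S" "s = pq s0" "t = pq t0" by blast
    then show "s \<otimes>\<^bsub>Rq\<^esub> t \<in> Sq" using mult_S sc pqh.hom_mult[symmetric] by (metis image_eqI)
  qed
  have oreq: "\<forall>r\<in>carrier Rq. \<forall>s\<in>Sq. \<exists>t\<in>Sq. \<exists>r'\<in>carrier Rq. r \<otimes>\<^bsub>Rq\<^esub> t = s \<otimes>\<^bsub>Rq\<^esub> r'"
  proof (intro ballI)
    fix r s assume "r \<in> carrier Rq" "s \<in> Sq"
    then obtain r0 s0 where r0: "r0 \<in> carrier R" and s0: "s0 \<in> S" and rs: "r = pq r0" "s = pq s0"
      using Rq_elem by blast
    obtain t r' where t: "t \<in> S" and r': "r' \<in> carrier R" and e: "r0 \<otimes>\<^bsub>R\<^esub> t = s0 \<otimes>\<^bsub>R\<^esub> r'"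
      using ore_cond[OF r0 s0] by blast
    have "r \<otimes>\<^bsub>Rq\<^esub> pq t = s \<otimes>\<^bsub>Rq\<^esub> pq r'" using rs e r0 t s0 r' sc by (simp flip: pqh.hom_mult)
    moreover have "pq t \<in> Sq" using t by blast
    moreover have "pq r' \<in> carrier Rq" using r' by simp
    ultimately show "\<exists>t\<in>Sq. \<exists>r'\<in>carrier Rq. r \<otimes>\<^bsub>Rq\<^esub> t = s \<otimes>\<^bsub>Rq\<^esub> r'" by blast
  qed
  have den: "\<forall>s\<in>Sq. \<forall>r\<in>carrier Rq. s \<otimes>\<^bsub>Rq\<^esub> r = \<zero>\<^bsub>Rq\<^esub> \<longrightarrow> (\<exists>t\<in>Sq. r \<otimes>\<^bsub>Rq\<^esub> t = \<zero>\<^bsub>Rq\<^esub>)"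
  proof (intro ballI impI)
    fix s r assume "s \<in> Sq" "r \<in> carrier Rq" "s \<otimes>\<^bsub>Rq\<^esub> r = \<zero>\<^bsub>Rq\<^esub>"
    then have "r = \<zero>\<^bsub>Rq\<^esub>" using Sq_lreg by blast
    moreover have "pq \<one>\<^bsub>R\<^esub> \<in> Sq" using one_S by blast
    moreover have "\<zero>\<^bsub>Rq\<^esub> \<otimes>\<^bsub>Rq\<^esub> pq \<one>\<^bsub>R\<^esub> = \<zero>\<^bsub>Rq\<^esub>" by simp
    ultimately show "\<exists>t\<in>Sq. r \<otimes>\<^bsub>Rq\<^esub> t = \<zero>\<^bsub>Rq\<^esub>" by blast
  qed
  show ?thesis using ms oreq den by (simp add: right_denominator_set_def right_ore_set_def)
qed

lemma model_exists:
  assumes ne: "A0 \<noteq> carrier R"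
  shows "\<exists>L :: ('a set set \<times> 'a set set) set ring. ring L \<and> (\<exists>g. g \<in> ring_hom Rq L \<and> (\<forall>t\<in>Sq. g t \<in> Units L)
     \<and> (\<forall>x\<in>carrier Rq. g x = \<zero>\<^bsub>L\<^esub> \<longrightarrow> (\<exists>t\<in>Sq. x \<otimes>\<^bsub>Rq\<^esub> t = \<zero>\<^bsub>Rq\<^esub>)))"
proof (rule left_reg_model[OF Rq_ring])
  have rd: "right_denominator_set Rq Sq" by (rule Sq_denominator[OF ne])
  show "Sq \<subseteq> carrier Rq" using sc by auto
  show "\<one>\<^bsub>Rq\<^esub> \<in> Sq" using one_S pqh.hom_one by force
  show "\<And>s t. s \<in> Sq \<Longrightarrow> t \<in> Sq \<Longrightarrow> s \<otimes>\<^bsub>Rq\<^esub> t \<in> Sq"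
    using rd unfolding right_denominator_set_def right_ore_set_def mult_set_def by blast
  show "\<And>r s. r \<in> carrier Rq \<Longrightarrow> s \<in> Sq \<Longrightarrow> \<exists>t\<in>Sq. \<exists>r'\<in>carrier Rq. r \<otimes>\<^bsub>Rq\<^esub> t = s \<otimes>\<^bsub>Rq\<^esub> r'"
    using rd unfolding right_denominator_set_def right_ore_set_def by blast
  show "\<And>s x. s \<in> Sq \<Longrightarrow> x \<in> carrier Rq \<Longrightarrow> s \<otimes>\<^bsub>Rq\<^esub> x = \<zero>\<^bsub>Rq\<^esub> \<Longrightarrow> x = \<zero>\<^bsub>Rq\<^esub>"
    using Sq_lreg by blast
qed

end

context loc_ore
begin

lemma lc_zero: "lc \<zero>\<^bsub>R\<^esub> = \<zero>\<^bsub>U\<^esub>"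
  by (rule ring_hom_zero[OF lc_hom Rr.ring_axioms Ur.ring_axioms])

lemma lc_cancel:
  assumes r: "r \<in> carrier R" and s: "s \<in> S" and z: "lc (r \<otimes>\<^bsub>R\<^esub> s) = \<zero>\<^bsub>U\<^esub>"
  shows "lc r = \<zero>\<^bsub>U\<^esub>"
proof -
  have z2: "lc r \<otimes>\<^bsub>U\<^esub> lc s = \<zero>\<^bsub>U\<^esub>" using z lc_mult r sc[OF s] by simp
  have "lc r = lc r \<otimes>\<^bsub>U\<^esub> (lc s \<otimes>\<^bsub>U\<^esub> lx s)" using lc_lx[OF s] lc_closed[OF r] by simp
  also have "\<dots> = (lc r \<otimes>\<^bsub>U\<^esub> lc s) \<otimes>\<^bsub>U\<^esub> lx s"
    using lx_closed[OF s] lc_closed[OF r] lc_closed[OF sc[OF s]] by (simp add: Ur.m_assoc)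
  also have "\<dots> = \<zero>\<^bsub>U\<^esub>" using z2 lx_closed[OF s] by simp
  finally show ?thesis .
qed

lemma ass_R_char:
  assumes ne: "A0 \<noteq> carrier R"
  shows "ass_R R S = {r \<in> carrier R. pq r \<in> ass_r Rq Sq}"
proof -
  obtain L :: "('a set set \<times> 'a set set) set ring" and g where L: "ring L" and g: "g \<in> ring_hom Rq L"
    and gu: "\<forall>t\<in>Sq. g t \<in> Units L" and gk: "\<forall>x\<in>carrier Rq. g x = \<zero>\<^bsub>L\<^esub> \<longrightarrow> (\<exists>t\<in>Sq. x \<otimes>\<^bsub>Rq\<^esub> t = \<zero>\<^bsub>Rq\<^esub>)"
    using model_exists[OF ne] by blast
  have f: "g \<circ> pq \<in> ring_hom R L" by (rule ring_hom_trans[OF pq_hom g])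
  have fu: "\<forall>s\<in>S. (g \<circ> pq) s \<in> Units L" using gu by simp
  obtain h where h: "h \<in> ring_hom U L" and hc: "\<forall>r\<in>carrier R. h (lc r) = (g \<circ> pq) r"
    using univ_prop[OF L f fu] by blast
  show ?thesis
  proof (rule equalityI; rule subsetI)
    fix r assume "r \<in> ass_R R S"
    then have r: "r \<in> carrier R" and z: "lc r = \<zero>\<^bsub>U\<^esub>" using ass_R_iff by auto
    have "g (pq r) = h (lc r)" using hc r by simp
    also have "\<dots> = \<zero>\<^bsub>L\<^esub>" using z ring_hom_zero[OF h Ur.ring_axioms L] by simp
    finally have "\<exists>t\<in>Sq. pq r \<otimes>\<^bsub>Rq\<^esub> t = \<zero>\<^bsub>Rq\<^esub>" using gk r by simp
    then show "r \<in> {r \<in> carrier R. pq r \<in> ass_r Rq Sq}" using r by (simp add: ass_r_def)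
  next
    fix r assume "r \<in> {r \<in> carrier R. pq r \<in> ass_r Rq Sq}"
    then have r: "r \<in> carrier R" and "\<exists>t\<in>Sq. pq r \<otimes>\<^bsub>Rq\<^esub> t = \<zero>\<^bsub>Rq\<^esub>" by (auto simp: ass_r_def)
    then obtain s where s: "s \<in> S" and z: "pq r \<otimes>\<^bsub>Rq\<^esub> pq s = \<zero>\<^bsub>Rq\<^esub>" by blast
    have "pq (r \<otimes>\<^bsub>R\<^esub> s) = \<zero>\<^bsub>Rq\<^esub>" using z r sc[OF s] by simp
    then have "r \<otimes>\<^bsub>R\<^esub> s \<in> A0" using pq_zero_iff[of "r \<otimes>\<^bsub>R\<^esub> s"] r sc[OF s] by simp
    then have "lc (r \<otimes>\<^bsub>R\<^esub> s) = \<zero>\<^bsub>U\<^esub>" using A0_ker ass_R_iff by blast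
    then have "lc r = \<zero>\<^bsub>U\<^esub>" by (rule lc_cancel[OF r s])
    then show "r \<in> ass_R R S" using r ass_R_iff by simp
  qed
qed

lemma localizable_iff: "right_localizable R S \<longleftrightarrow> A0 \<noteq> carrier R"
proof
  assume loc: "right_localizable R S"
  show "A0 \<noteq> carrier R"
  proof
    assume "A0 = carrier R"
    then have "\<one>\<^bsub>R\<^esub> \<in> ass_R R S" using A0_ker by blast
    then have "\<one>\<^bsub>U\<^esub> = \<zero>\<^bsub>U\<^esub>" using ass_R_iff lc_one by simp
    then show False using loc unfolding right_localizable_def by blast
  qed
next
  assume ne: "A0 \<noteq> carrier R"
  have "\<one>\<^bsub>U\<^esub> \<noteq> \<zero>\<^bsub>U\<^esub>"
  proof
    assume "\<one>\<^bsub>U\<^esub> = \<zero>\<^bsub>U\<^esub>"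
    then have "\<one>\<^bsub>R\<^esub> \<in> ass_R R S" using ass_R_iff lc_one by simp
    then have "pq \<one>\<^bsub>R\<^esub> \<in> ass_r Rq Sq" using ass_R_char[OF ne] by blast
    then obtain s where s: "s \<in> S" and z: "pq \<one>\<^bsub>R\<^esub> \<otimes>\<^bsub>Rq\<^esub> pq s = \<zero>\<^bsub>Rq\<^esub>" by (auto simp: ass_r_def)
    have "pq s = \<zero>\<^bsub>Rq\<^esub>" using z sc[OF s] by simp
    then have "s \<in> A0" using pq_zero_iff sc[OF s] by simp
    then show False using S_in_A0 s ne by blast
  qed
  then show "right_localizable R S"
    unfolding right_localizable_def using loc_gen by blast
qed

definition psi where "psi = (\<lambda>C1. the_elem (lc ` C1))"

lemma A0_kernel: "A0 \<subseteq> a_kernel R U lc"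
  using A0_ker unfolding ass_R_def .

lemma psi_hom: "psi \<in> ring_hom Rq U"
  unfolding psi_def by (rule quot_lift(1)[OF ringR U_ring A0_ideal lc_hom A0_kernel])

lemma psi_pq: "r \<in> carrier R \<Longrightarrow> psi (pq r) = lc r"
  unfolding psi_def by (rule quot_lift(2)[OF ringR U_ring A0_ideal lc_hom A0_kernel])

lemma psi_part:
  assumes ne: "A0 \<noteq> carrier R"
  shows "is_right_ring_of_fractions Rq Sq U psi \<and> (\<forall>r\<in>carrier R. psi (pq r) = lc r)"
proof -
  have un: "\<forall>t\<in>Sq. psi t \<in> Units U" using psi_pq sc lc_Units by auto
  have gen: "\<forall>q\<in>carrier U. \<exists>a\<in>carrier Rq. \<exists>t\<in>Sq. q = psi a \<otimes>\<^bsub>U\<^esub> inv\<^bsub>U\<^esub> (psi t)"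
  proof
    fix q assume "q \<in> carrier U"
    then obtain r s where r: "r \<in> carrier R" and s: "s \<in> S" and q: "q = lc r \<otimes>\<^bsub>U\<^esub> lx s"
      using loc_gen by blast
    have "q = psi (pq r) \<otimes>\<^bsub>U\<^esub> inv\<^bsub>U\<^esub> (psi (pq s))"
      using q r s sc psi_pq lc_inv by simp
    moreover have "pq r \<in> carrier Rq" using r by simp
    moreover have "pq s \<in> Sq" using s by blast
    ultimately show "\<exists>a\<in>carrier Rq. \<exists>t\<in>Sq. q = psi a \<otimes>\<^bsub>U\<^esub> inv\<^bsub>U\<^esub> (psi t)" by blast
  qed
  have ker: "a_kernel Rq U psi = ass_r Rq Sq"
  proof (rule equalityI; rule subsetI)
    fix C1 assume "C1 \<in> a_kernel Rq U psi"
    then have C: "C1 \<in> carrier Rq" and z: "psi C1 = \<zero>\<^bsub>U\<^esub>" unfolding a_kernel_def' by auto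
    obtain r where r: "r \<in> carrier R" and Cr: "C1 = pq r" using Rq_elem[OF C] by blast
    have "r \<in> ass_R R S" using z Cr r psi_pq ass_R_iff by simp
    then show "C1 \<in> ass_r Rq Sq" using ass_R_char[OF ne] Cr by blast
  next
    fix C1 assume a: "C1 \<in> ass_r Rq Sq"
    then have C: "C1 \<in> carrier Rq" by (simp add: ass_r_def)
    obtain r where r: "r \<in> carrier R" and Cr: "C1 = pq r" using Rq_elem[OF C] by blast
    have "r \<in> ass_R R S" using ass_R_char[OF ne] a Cr r by blast
    then have "psi C1 = \<zero>\<^bsub>U\<^esub>" using Cr r psi_pq ass_R_iff by simp
    then show "C1 \<in> a_kernel Rq U psi" using C unfolding a_kernel_def' by blast
  qed
  show ?thesis
    unfolding is_right_ring_of_fractions_def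
    using U_ring psi_hom un gen ker psi_pq by blast
qed

lemma iso_part:
  fixes Q :: "'b ring"
  assumes ne: "A0 \<noteq> carrier R" and fr: "is_right_ring_of_fractions Rq Sq Q \<phi>"
  shows "\<exists>h. h \<in> ring_iso U Q \<and> (\<forall>r\<in>carrier R. h (lc r) = \<phi> (pq r))"
proof -
  have Q: "ring Q" and ph: "\<phi> \<in> ring_hom Rq Q" and phu: "\<forall>t\<in>Sq. \<phi> t \<in> Units Q"
    and phg: "\<forall>q\<in>carrier Q. \<exists>a\<in>carrier Rq. \<exists>t\<in>Sq. q = \<phi> a \<otimes>\<^bsub>Q\<^esub> inv\<^bsub>Q\<^esub> (\<phi> t)"
    and phk: "a_kernel Rq Q \<phi> = ass_r Rq Sq"
    using fr unfolding is_right_ring_of_fractions_def by auto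
  interpret Q: ring Q by (rule Q)
  have f: "\<phi> \<circ> pq \<in> ring_hom R Q" by (rule ring_hom_trans[OF pq_hom ph])
  have fu: "\<forall>s\<in>S. (\<phi> \<circ> pq) s \<in> Units Q" using phu by simp
  obtain h where h: "h \<in> ring_hom U Q" and hc: "\<forall>r\<in>carrier R. h (lc r) = (\<phi> \<circ> pq) r"
    and hx: "\<forall>s\<in>S. h (lx s) = inv\<^bsub>Q\<^esub> ((\<phi> \<circ> pq) s)"
    using univ_prop[OF Q f fu] by blast
  interpret hh: ring_hom_ring U Q h by (intro ring_hom_ringI2 Ur.ring_axioms Q h)
  have kerh: "a_kernel U Q h = {\<zero>\<^bsub>U\<^esub>}"
  proof (rule equalityI; rule subsetI)
    fix q assume "q \<in> a_kernel U Q h"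
    then have qc: "q \<in> carrier U" and z: "h q = \<zero>\<^bsub>Q\<^esub>" unfolding a_kernel_def' by auto
    obtain r s where r: "r \<in> carrier R" and s: "s \<in> S" and q: "q = lc r \<otimes>\<^bsub>U\<^esub> lx s"
      using loc_gen[OF qc] by blast
    define u where "u = \<phi> (pq s)"
    have u: "u \<in> Units Q" using phu s u_def by blast
    have pr: "\<phi> (pq r) \<in> carrier Q" using r ph by (simp add: ring_hom_closed)
    have "\<phi> (pq r) \<otimes>\<^bsub>Q\<^esub> inv\<^bsub>Q\<^esub> u = \<zero>\<^bsub>Q\<^esub>"
      using z q r s hc hx lc_closed lx_closed by (simp add: u_def)
    then have "\<phi> (pq r) \<otimes>\<^bsub>Q\<^esub> inv\<^bsub>Q\<^esub> u \<otimes>\<^bsub>Q\<^esub> u = \<zero>\<^bsub>Q\<^esub>" using u Q.Units_closed by simp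
    moreover have "\<phi> (pq r) \<otimes>\<^bsub>Q\<^esub> inv\<^bsub>Q\<^esub> u \<otimes>\<^bsub>Q\<^esub> u = \<phi> (pq r) \<otimes>\<^bsub>Q\<^esub> (inv\<^bsub>Q\<^esub> u \<otimes>\<^bsub>Q\<^esub> u)"
      using u pr by (intro Q.m_assoc) auto
    moreover have "inv\<^bsub>Q\<^esub> u \<otimes>\<^bsub>Q\<^esub> u = \<one>\<^bsub>Q\<^esub>" using u by (rule Q.Units_l_inv)
    ultimately have "\<phi> (pq r) = \<zero>\<^bsub>Q\<^esub>" using pr by simp
    moreover have "pq r \<in> carrier Rq" using r by simp
    ultimately have "pq r \<in> a_kernel Rq Q \<phi>" unfolding a_kernel_def' by blast
    then have "pq r \<in> ass_r Rq Sq" using phk by simp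
    then have "r \<in> ass_R R S" using ass_R_char[OF ne] r by blast
    then have "lc r = \<zero>\<^bsub>U\<^esub>" using ass_R_iff by simp
    then show "q \<in> {\<zero>\<^bsub>U\<^esub>}" using q s lx_closed by simp
  next
    fix q assume "q \<in> {\<zero>\<^bsub>U\<^esub>}"
    then show "q \<in> a_kernel U Q h" unfolding a_kernel_def' by simp
  qed
  have inj: "inj_on h (carrier U)" using hh.inj_iff_trivial_ker kerh by simp
  have surj: "h ` carrier U = carrier Q"
  proof (rule equalityI; rule subsetI)
    fix y assume "y \<in> h ` carrier U"
    then show "y \<in> carrier Q" using hh.hom_closed by auto
  next
    fix y assume "y \<in> carrier Q"
    then obtain a t where a: "a \<in> carrier Rq" and t: "t \<in> Sq" and y: "y = \<phi> a \<otimes>\<^bsub>Q\<^esub> inv\<^bsub>Q\<^esub> (\<phi> t)"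
      using phg by blast
    obtain r where r: "r \<in> carrier R" and ar: "a = pq r" using Rq_elem[OF a] by blast
    obtain s where s: "s \<in> S" and ts: "t = pq s" using t by blast
    have "h (lc r \<otimes>\<^bsub>U\<^esub> lx s) = y" using y ar ts r s hc hx lc_closed lx_closed by simp
    moreover have "lc r \<otimes>\<^bsub>U\<^esub> lx s \<in> carrier U" using r s lc_closed lx_closed by simp
    ultimately show "y \<in> h ` carrier U" by blast
  qed
  have "h \<in> ring_iso U Q"
    unfolding ring_iso_def bij_betw_def using h inj surj by blast
  then show ?thesis using hc by auto
qed

end

theorem theorem2p11:
  fixes R :: "'a ring" and S :: "'a set"
  assumes "ring R" and "right_ore_set R S"
  shows "(right_localizable R S \<longleftrightarrow> a' R S \<noteq> carrier R)
    \<and> (a' R S \<noteq> carrier R \<longrightarrow>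
        (let R' = R Quot a' R S; \<pi>' = (\<lambda>r. a' R S +>\<^bsub>R\<^esub> r); S' = \<pi>' ` S in
           right_denominator_set R' S'
         \<and> ass_R R S = {r \<in> carrier R. \<pi>' r \<in> ass_r R' S'}
         \<and> (\<exists>\<psi>. is_right_ring_of_fractions R' S' (univ_loc R S) \<psi>
               \<and> (\<forall>r\<in>carrier R. \<psi> (\<pi>' r) = loc_can R S r))
         \<and> (\<forall>(Q :: 'b ring) \<phi>. is_right_ring_of_fractions R' S' Q \<phi> \<longrightarrow>
               (\<exists>h. h \<in> ring_iso (univ_loc R S) Q
                  \<and> (\<forall>r\<in>carrier R. h (loc_can R S r) = \<phi> (\<pi>' r))))))"
proof -
  have Ssub: "S \<subseteq> carrier R" using assms(2) by (simp add: right_ore_set_def mult_set_def)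
  interpret L: loc_ore R S
    by (intro loc_ore.intro loc_setup.intro loc_ore_axioms.intro assms Ssub)
  show ?thesis
    unfolding Let_def
    using L.localizable_iff L.Sq_denominator L.ass_R_char L.psi_part L.iso_part
    by blast
qed

end
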